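(* Assume $L\in C^2(\mathbb{R}^2;\mathbb{R})$ is strictly convex in $v$, $\Psi\in C^1(\mathbb{R})$, and Assumptions (A5) and (A7) hold. Let $x_0\in\mathbb{R}$, $\varpi\in\mathbb{H}_{\mathbb{F}}$, and let $(X^*,P,Z)$ with $X^*,P,Z\in\mathbb{H}_{\mathbb{F}}$ solve $$dX_t=-H_p(X_t,P_t+\varpi_t)\,dt,\quad X_0=x_0,\qquad dP_t=H_x(X_t,P_t+\varpi_t)\,dt+Z_t\,dW_t,\quad P_T=\Psi'(X_T)$$ on $[0,T]$. Then $v^*:=-H_p(X^*,P+\varpi)$ and $X^*$ satisfy, for every $\delta v\in\mathbb{H}_{\mathbb{F}}$ with $\delta X_t=\int_0^t\delta v_sds$, $$\mathbb{E}\left[\int_0^T\Big(L_x(X^*_t,v^*_t)\delta X_t+\big(L_v(X^*_t,v^*_t)+\varpi_t\big)\delta v_t\Big)dt+\Psi'(X^*_T)\delta X_T\right]=0.$$ Furthermore, $P=-L_v(X^*,v^* )-\varpi$.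
   Context: Fix $T>0$ and a complete filtered probability space $(\Omega,\mathcal{F},\mathbb{F},\mathbb{P})$, where $\mathbb{F}$ is the standard filtration generated by a one-dimensional Brownian motion $W$. $\mathbb{H}_{\mathbb{F}}$ denotes the Hilbert space of measurable, $\mathbb{F}$-adapted processes $v:[0,T]\times\Omega\to\mathbb{R}$ with $\mathbb{E}[\int_0^T v_t^2dt]<\infty$. $L\ge0$. The Hamiltonian is $H(x,p)=\sup_{v\in\mathbb{R}}\{-pv-L(x,v)\}$. (A5) There are $\alpha>0$, $\beta\ge0$ with $\alpha|v|^2-\beta\le L(x,v)$ for all $x,v$. (A7) There is $C>0$ with $|H_p(x,p)|\le C(1+|p|)$ for all $(x,p)\in\mathbb{R}^2$. *)

theory Defs
  imports "HOL-Probability.Probability"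
begin

definition strictly_convex :: "(real \<Rightarrow> real) \<Rightarrow> bool" where
  "strictly_convex f \<longleftrightarrow>
     (\<forall>x y (u::real). x \<noteq> y \<longrightarrow> 0 < u \<longrightarrow> u < 1 \<longrightarrow>
        f (u * x + (1 - u) * y) < u * f x + (1 - u) * f y)"

definition C2_fun :: "(real \<times> real \<Rightarrow> real) \<Rightarrow> bool" where
  "C2_fun L \<longleftrightarrow>
     (\<exists>(D1 :: real \<times> real \<Rightarrow> ((real \<times> real) \<Rightarrow>\<^sub>L real))
       (D2 :: real \<times> real \<Rightarrow> ((real \<times> real) \<Rightarrow>\<^sub>L ((real \<times> real) \<Rightarrow>\<^sub>L real))).
        (\<forall>z. (L has_derivative blinfun_apply (D1 z)) (at z)) \<and>
        (\<forall>z. (D1 has_derivative blinfun_apply (D2 z)) (at z)) \<and>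
        continuous_on UNIV D2)"

definition Lx :: "(real \<times> real \<Rightarrow> real) \<Rightarrow> real \<Rightarrow> real \<Rightarrow> real" where
  "Lx L x v = deriv (\<lambda>y. L (y, v)) x"

definition Lv :: "(real \<times> real \<Rightarrow> real) \<Rightarrow> real \<Rightarrow> real \<Rightarrow> real" where
  "Lv L x v = deriv (\<lambda>w. L (x, w)) v"

definition Ham :: "(real \<times> real \<Rightarrow> real) \<Rightarrow> real \<Rightarrow> real \<Rightarrow> real" where
  "Ham L x p = (SUP v\<in>UNIV. - p * v - L (x, v))"

definition Hx :: "(real \<times> real \<Rightarrow> real) \<Rightarrow> real \<Rightarrow> real \<Rightarrow> real" where
  "Hx L x p = deriv (\<lambda>y. Ham L y p) x"

definition Hp :: "(real \<times> real \<Rightarrow> real) \<Rightarrow> real \<Rightarrow> real \<Rightarrow> real" where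
  "Hp L x p = deriv (\<lambda>q. Ham L x q) p"

definition nat_gen :: "'a measure \<Rightarrow> (real \<Rightarrow> 'a \<Rightarrow> real) \<Rightarrow> real \<Rightarrow> 'a set set" where
  "nat_gen M W t = {W s -` B \<inter> space M | s B. 0 \<le> s \<and> s \<le> t \<and> B \<in> sets borel}"

definition std_filtration :: "'a measure \<Rightarrow> (real \<Rightarrow> 'a \<Rightarrow> real) \<Rightarrow> real \<Rightarrow> 'a measure" where
  "std_filtration M W t = sigma (space M) (nat_gen M W t \<union> null_sets M)"

definition brownian_motion :: "'a measure \<Rightarrow> (real \<Rightarrow> 'a \<Rightarrow> real) \<Rightarrow> bool" where
  "brownian_motion M W \<longleftrightarrow>
     prob_space M \<and>
     (\<forall>t. W t \<in> borel_measurable M) \<and>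
     (\<forall>\<omega>\<in>space M. W 0 \<omega> = 0 \<and> continuous_on {0..} (\<lambda>t. W t \<omega>)) \<and>
     (\<forall>s t. 0 \<le> s \<longrightarrow> s < t \<longrightarrow>
        distributed M lborel (\<lambda>\<omega>. W t \<omega> - W s \<omega>)
           (\<lambda>x. ennreal (normal_density 0 (sqrt (t - s)) x)) \<and>
        prob_space.indep_set M (sigma_sets (space M) (nat_gen M W s))
           (sigma_sets (space M)
              {(\<lambda>\<omega>. W t \<omega> - W s \<omega>) -` B \<inter> space M | B. B \<in> sets borel}))"

definition H_F :: "'a measure \<Rightarrow> (real \<Rightarrow> 'a measure) \<Rightarrow> real \<Rightarrow> (real \<Rightarrow> 'a \<Rightarrow> real) \<Rightarrow> bool" where
  "H_F M F T v \<longleftrightarrow>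
     (\<lambda>(t, \<omega>). v t \<omega>) \<in> borel_measurable (restrict_space lborel {0..T} \<Otimes>\<^sub>M M) \<and>
     (\<forall>t\<in>{0..T}. v t \<in> borel_measurable (F t)) \<and>
     (\<integral>\<^sup>+ z. ennreal ((case z of (t, \<omega>) \<Rightarrow> v t \<omega>)\<^sup>2)
        \<partial>(restrict_space lborel {0..T} \<Otimes>\<^sub>M M)) < \<infinity>"

definition step_process :: "nat \<Rightarrow> (nat \<Rightarrow> real) \<Rightarrow> (nat \<Rightarrow> 'a \<Rightarrow> real) \<Rightarrow> real \<Rightarrow> 'a \<Rightarrow> real" where
  "step_process n ts xi t \<omega> = (\<Sum>i<n. (if ts i \<le> t \<and> t < ts (Suc i) then xi i \<omega> else 0))"

definition step_integral :: "nat \<Rightarrow> (nat \<Rightarrow> real) \<Rightarrow> (nat \<Rightarrow> 'a \<Rightarrow> real) \<Rightarrow> (real \<Rightarrow> 'a \<Rightarrow> real)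
    \<Rightarrow> real \<Rightarrow> 'a \<Rightarrow> real" where
  "step_integral n ts xi W t \<omega> =
     (\<Sum>i<n. xi i \<omega> * (W (min t (ts (Suc i))) \<omega> - W (min t (ts i)) \<omega>))"

definition simple_adapted :: "'a measure \<Rightarrow> (real \<Rightarrow> 'a measure) \<Rightarrow> real
    \<Rightarrow> nat \<Rightarrow> (nat \<Rightarrow> real) \<Rightarrow> (nat \<Rightarrow> 'a \<Rightarrow> real) \<Rightarrow> bool" where
  "simple_adapted M F T n ts xi \<longleftrightarrow>
     ts 0 = 0 \<and> ts n = T \<and> (\<forall>i<n. ts i < ts (Suc i)) \<and>
     (\<forall>i<n. xi i \<in> borel_measurable (F (ts i)) \<and> integrable M (\<lambda>\<omega>. (xi i \<omega>)\<^sup>2))"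

text \<open>I is (a version of) the Ito integral t |-> int_0^t Z dW on [0,T]:
  the L^2 limit of elementary integrals of simple adapted processes
  approximating Z in L^2(dt x dP).\<close>
definition ito_integral :: "'a measure \<Rightarrow> (real \<Rightarrow> 'a measure) \<Rightarrow> (real \<Rightarrow> 'a \<Rightarrow> real) \<Rightarrow> real
    \<Rightarrow> (real \<Rightarrow> 'a \<Rightarrow> real) \<Rightarrow> (real \<Rightarrow> 'a \<Rightarrow> real) \<Rightarrow> bool" where
  "ito_integral M F W T Z I \<longleftrightarrow>
     (\<exists>(n :: nat \<Rightarrow> nat) (ts :: nat \<Rightarrow> nat \<Rightarrow> real) (xi :: nat \<Rightarrow> nat \<Rightarrow> 'a \<Rightarrow> real).
        (\<forall>k. simple_adapted M F T (n k) (ts k) (xi k)) \<and>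
        (\<lambda>k. \<integral>\<^sup>+ \<omega>. (\<integral>\<^sup>+ t\<in>{0..T}.
              ennreal ((Z t \<omega> - step_process (n k) (ts k) (xi k) t \<omega>)\<^sup>2) \<partial>lborel) \<partial>M)
          \<longlonglongrightarrow> 0 \<and>
        (\<forall>t\<in>{0..T}. I t \<in> borel_measurable M \<and>
           (\<lambda>k. \<integral>\<^sup>+ \<omega>. ennreal ((I t \<omega> - step_integral (n k) (ts k) (xi k) W t \<omega>)\<^sup>2) \<partial>M)
             \<longlonglongrightarrow> 0))"

end

theory Submission
  imports Defs
begin

lemma C2_D1:
  assumes "C2_fun L"
  obtains D1 :: "real \<times> real \<Rightarrow> ((real \<times> real) \<Rightarrow>\<^sub>L real)"
  where "\<And>z. (L has_derivative blinfun_apply (D1 z)) (at z)" "continuous_on UNIV D1"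
proof -
  from assms obtain D1 D2 where
    d1: "\<forall>z. (L has_derivative blinfun_apply (D1 z)) (at z)" and
    d2: "\<forall>z. (D1 has_derivative blinfun_apply (D2 z)) (at z)"
    unfolding C2_fun_def by blast
  have "continuous_on UNIV D1"
    using d2 by (meson continuous_at_imp_continuous_on has_derivative_continuous)
  with d1 that show ?thesis by blast
qed

lemma Lx_D1:
  assumes "\<And>z. (L has_derivative blinfun_apply (D1 z)) (at z)"
  shows "((\<lambda>y. L (y, v)) has_real_derivative blinfun_apply (D1 (x, v)) (1, 0)) (at x)"
    "Lx L x v = blinfun_apply (D1 (x, v)) (1, 0)"
proof -
  have "((\<lambda>y. L (y, v)) has_derivative (\<lambda>h. blinfun_apply (D1 (x, v)) (h, 0))) (at x)"
    using has_derivative_compose[OF has_derivative_Pair[OF has_derivative_ident has_derivative_const] assms[of "(x,v)"]]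
    by (simp add: o_def)
  moreover have "(\<lambda>h. blinfun_apply (D1 (x, v)) (h, 0)) = (\<lambda>h. blinfun_apply (D1 (x, v)) (1, 0) * h)"
  proof
    fix h :: real
    have "(h, 0::real) = h *\<^sub>R (1, 0)" by simp
    then show "blinfun_apply (D1 (x, v)) (h, 0) = blinfun_apply (D1 (x, v)) (1, 0) * h"
      by (metis blinfun.scaleR_right real_scaleR_def mult.commute)
  qed
  ultimately show *: "((\<lambda>y. L (y, v)) has_real_derivative blinfun_apply (D1 (x, v)) (1, 0)) (at x)"
    by (simp add: has_field_derivative_def)
  then show "Lx L x v = blinfun_apply (D1 (x, v)) (1, 0)"
    unfolding Lx_def by (rule DERIV_imp_deriv)
qed

lemma Lv_D1:
  assumes "\<And>z. (L has_derivative blinfun_apply (D1 z)) (at z)"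
  shows "((\<lambda>w. L (x, w)) has_real_derivative blinfun_apply (D1 (x, v)) (0, 1)) (at v)"
    "Lv L x v = blinfun_apply (D1 (x, v)) (0, 1)"
proof -
  have "((\<lambda>w. L (x, w)) has_derivative (\<lambda>h. blinfun_apply (D1 (x, v)) (0, h))) (at v)"
    using has_derivative_compose[OF has_derivative_Pair[OF has_derivative_const has_derivative_ident] assms[of "(x,v)"]]
    by (simp add: o_def)
  moreover have "(\<lambda>h. blinfun_apply (D1 (x, v)) (0, h)) = (\<lambda>h. blinfun_apply (D1 (x, v)) (0, 1) * h)"
  proof
    fix h :: real
    have "(0::real, h) = h *\<^sub>R (0, 1)" by simp
    then show "blinfun_apply (D1 (x, v)) (0, h) = blinfun_apply (D1 (x, v)) (0, 1) * h"
      by (metis blinfun.scaleR_right real_scaleR_def mult.commute)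
  qed
  ultimately show *: "((\<lambda>w. L (x, w)) has_real_derivative blinfun_apply (D1 (x, v)) (0, 1)) (at v)"
    by (simp add: has_field_derivative_def)
  then show "Lv L x v = blinfun_apply (D1 (x, v)) (0, 1)"
    unfolding Lv_def by (rule DERIV_imp_deriv)
qed

lemma cont_D1_apply:
  assumes "continuous_on UNIV D1"
  shows "continuous_on UNIV (\<lambda>z. blinfun_apply (D1 z) c)"
  by (intro continuous_intros assms)

lemma isCont_eps:
  fixes m :: "real \<Rightarrow> real"
  assumes "isCont m x" "e > 0"
  shows "\<exists>d>0. \<forall>y. \<bar>y - x\<bar> < d \<longrightarrow> \<bar>m y - m x\<bar> < e"
proof -
  from assms obtain s where s: "s > 0" "\<forall>y. y \<noteq> x \<and> norm (y - x) < s \<longrightarrow> norm (m y - m x) < e"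
    unfolding isCont_def LIM_eq by blast
  show ?thesis
  proof (intro exI[of _ s] conjI allI impI)
    fix y assume "\<bar>y - x\<bar> < s"
    then show "\<bar>m y - m x\<bar> < e" using s assms(2) by (cases "y = x") auto
  qed (use s in auto)
qed

lemma danskin:
  fixes f m :: "real \<Rightarrow> real" and g :: "real \<Rightarrow> real \<Rightarrow> real"
  assumes fmax: "\<And>y w. g y w \<le> f y" and fatt: "\<And>y. f y = g y (m y)" and cont: "isCont m x"
   and unif: "\<And>e. e > 0 \<Longrightarrow> \<exists>d>0. \<forall>y w. \<bar>y - x\<bar> < d \<longrightarrow> \<bar>w - m x\<bar> < d \<longrightarrow>
                 \<bar>g y w - g x w - D * (y - x)\<bar> \<le> e * \<bar>y - x\<bar>"
  shows "(f has_real_derivative D) (at x)"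
  unfolding has_field_derivative_def has_derivative_at_alt
proof (intro conjI allI impI)
  show "bounded_linear ((*) D)" by (rule bounded_linear_mult_right)
  fix e :: real assume e: "e > 0"
  obtain d where d: "d > 0" "\<forall>y w. \<bar>y - x\<bar> < d \<longrightarrow> \<bar>w - m x\<bar> < d \<longrightarrow>
                 \<bar>g y w - g x w - D * (y - x)\<bar> \<le> e * \<bar>y - x\<bar>"
    using unif[OF e] by blast
  obtain d2 where d2: "d2 > 0" "\<forall>y. \<bar>y - x\<bar> < d2 \<longrightarrow> \<bar>m y - m x\<bar> < d"
    using isCont_eps[OF cont d(1)] by blast
  show "\<exists>d>0. \<forall>y. norm (y - x) < d \<longrightarrow> norm (f y - f x - D * (y - x)) \<le> e * norm (y - x)"
  proof (intro exI[of _ "min d d2"] conjI allI impI)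
    show "min d d2 > 0" using d d2 by simp
    fix y assume y: "norm (y - x) < min d d2"
    have y1: "\<bar>y - x\<bar> < d" and y2: "\<bar>y - x\<bar> < d2" using y by auto
    have lo: "g y (m x) - g x (m x) \<le> f y - f x" using fmax[of y "m x"] fatt[of x] by simp
    have hi: "f y - f x \<le> g y (m y) - g x (m y)" using fmax[of x "m y"] fatt[of y] by simp
    have A: "\<bar>g y (m x) - g x (m x) - D * (y - x)\<bar> \<le> e * \<bar>y - x\<bar>"
      using d(2) y1 d(1) by auto
    have B: "\<bar>g y (m y) - g x (m y) - D * (y - x)\<bar> \<le> e * \<bar>y - x\<bar>"
      using d(2) y1 d2(2) y2 by auto
    show "norm (f y - f x - D * (y - x)) \<le> e * norm (y - x)"
      using lo hi A B by (simp add: abs_le_iff)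
  qed
qed

definition vstar :: "(real \<times> real \<Rightarrow> real) \<Rightarrow> real \<Rightarrow> real \<Rightarrow> real" where
  "vstar L x p = (THE v. Lv L x v = - p)"

context
  fixes L :: "real \<times> real \<Rightarrow> real" and \<alpha> \<beta> :: real
  assumes C2: "C2_fun L" and nonneg: "\<forall>x v. 0 \<le> L (x,v)"
    and sc: "\<forall>x. strictly_convex (\<lambda>v. L (x,v))"
    and A5: "0 < \<alpha>" "0 \<le> \<beta>" "\<forall>x v. \<alpha> * v\<^sup>2 - \<beta> \<le> L (x,v)"
begin

lemma Lv_deriv: "((\<lambda>w. L (x,w)) has_real_derivative Lv L x v) (at v)"
proof -
  obtain D1 where "\<And>z. (L has_derivative blinfun_apply (D1 z)) (at z)" using C2_D1[OF C2] by blast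
  then show ?thesis using Lv_D1 by metis
qed

lemma Lx_deriv: "((\<lambda>y. L (y,v)) has_real_derivative Lx L x v) (at x)"
proof -
  obtain D1 where "\<And>z. (L has_derivative blinfun_apply (D1 z)) (at z)" using C2_D1[OF C2] by blast
  then show ?thesis using Lx_D1 by metis
qed

lemma Lx_Lv_cont:
  "continuous_on UNIV (\<lambda>z. Lx L (fst z) (snd z))" "continuous_on UNIV (\<lambda>z. Lv L (fst z) (snd z))"
proof -
  obtain D1 where d: "\<And>z. (L has_derivative blinfun_apply (D1 z)) (at z)" "continuous_on UNIV D1"
    using C2_D1[OF C2] by blast
  have "(\<lambda>z. Lx L (fst z) (snd z)) = (\<lambda>z. blinfun_apply (D1 z) (1,0))"
    using Lx_D1(2)[OF d(1)] by auto
  then show "continuous_on UNIV (\<lambda>z. Lx L (fst z) (snd z))" using cont_D1_apply[OF d(2), of "(1,0)"] by metis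
  have "(\<lambda>z. Lv L (fst z) (snd z)) = (\<lambda>z. blinfun_apply (D1 z) (0,1))"
    using Lv_D1(2)[OF d(1)] by auto
  then show "continuous_on UNIV (\<lambda>z. Lv L (fst z) (snd z))" using cont_D1_apply[OF d(2), of "(0,1)"] by metis
qed

lemma Lv_cont_v: "continuous_on UNIV (Lv L x)"
proof -
  have "continuous_on UNIV ((\<lambda>z. Lv L (fst z) (snd z)) \<circ> (\<lambda>v. (x, v)))"
    by (intro continuous_on_compose continuous_intros continuous_on_subset[OF Lx_Lv_cont(2)]) auto
  then show ?thesis by (simp add: o_def)
qed

lemma convexL: "convex_on UNIV (\<lambda>v. L (x,v))"
  unfolding convex_on_def
proof (intro conjI ballI allI impI)
  fix a b u v :: real assume uv: "0 \<le> u" "0 \<le> v" "u + v = 1"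
  show "L (x, u *\<^sub>R a + v *\<^sub>R b) \<le> u * L (x, a) + v * L (x, b)"
  proof (cases "a = b \<or> u = 0 \<or> v = 0")
    case True
    then show ?thesis
    proof (elim disjE)
      assume "a = b" then show ?thesis using uv by (metis distrib_left distrib_right mult_1 mult.commute order_refl real_scaleR_def)
    next
      assume "u = 0" then show ?thesis using uv by simp
    next
      assume "v = 0" then show ?thesis using uv by simp
    qed
  next
    case False
    then have "u < 1" "0 < u" using uv by auto
    then have "L (x, u * a + (1 - u) * b) < u * L (x, a) + (1 - u) * L (x, b)"
      using sc False unfolding strictly_convex_def by blast
    moreover have "v = 1 - u" using uv by simp
    ultimately show ?thesis by simp
  qed
qed simp

lemma tangent: "Lv L x v * (w - v) \<le> L (x,w) - L (x,v)"
  using convex_on_imp_above_tangent[OF convexL[of x], of v w "Lv L x v"] Lv_deriv[of x v]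
  by simp

lemma Lv_strict_mono: assumes "v < w" shows "Lv L x v < Lv L x w"
proof -
  define m where "m = (v + w) / 2"
  define d where "d = (w - v) / 2"
  have d: "d > 0" using assms by (simp add: d_def)
  have mv: "m - v = d" and wm: "w - m = d" by (simp_all add: m_def d_def field_simps)
  have "L (x, (1/2) * v + (1 - 1/2) * w) < (1/2) * L (x, v) + (1 - 1/2) * L (x, w)"
    using sc assms unfolding strictly_convex_def by (metis less_irrefl half_gt_zero_iff less_numeral_extra(1)
        field_sum_of_halves less_add_same_cancel1)
  moreover have "(1/2) * v + (1 - 1/2) * w = m" by (simp add: m_def field_simps)
  ultimately have mid: "L (x, m) - L (x, v) < L (x, w) - L (x, m)" by simp
  have t1: "Lv L x v * d \<le> L (x, m) - L (x, v)" using tangent[of x v m] mv by simp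
  have t2: "L (x, w) - L (x, m) \<le> Lv L x w * d" using tangent[of x w m] wm by (simp add: algebra_simps)
  have "Lv L x v * d < Lv L x w * d" using t1 t2 mid by linarith
  then show ?thesis using d by simp
qed

lemma Lv_mono: "v \<le> w \<Longrightarrow> Lv L x v \<le> Lv L x w"
  using Lv_strict_mono[of v w x] by (cases "v = w") auto

lemma Lv_inj: "Lv L x v = Lv L x w \<Longrightarrow> v = w"
  using Lv_strict_mono[of v w x] Lv_strict_mono[of w v x] by (cases v w rule: linorder_cases) auto

lemma Lv_surj: "\<exists>v. Lv L x v = c"
proof -
  define c0 where "c0 = \<beta> + L (x, 0)"
  have c0: "c0 \<ge> 0" using A5 nonneg by (simp add: c0_def add_nonneg_nonneg)
  have key: "Lv L x v * v \<ge> \<alpha> * v\<^sup>2 - c0" for v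
  proof -
    have "Lv L x v * (0 - v) \<le> L (x,0) - L (x,v)" by (rule tangent)
    then show ?thesis using A5(3) c0_def by (smt (verit, best) mult_minus_right)
  qed
  define R where "R = (\<bar>c\<bar> + c0 + 1) / \<alpha> + 1"
  have R1: "R \<ge> 1" using A5 c0 by (simp add: R_def)
  have aR: "\<alpha> * R = \<bar>c\<bar> + c0 + 1 + \<alpha>" using A5 by (simp add: R_def field_simps)
  have "Lv L x R * R \<ge> \<alpha> * R\<^sup>2 - c0 * R"
    using key[of R] R1 c0 by (smt (verit, best) mult_le_cancel_left1)
  then have "R * (Lv L x R - (\<alpha> * R - c0)) \<ge> 0" by (simp add: algebra_simps power2_eq_square)
  then have "Lv L x R \<ge> \<alpha> * R - c0" using R1 by (simp add: zero_le_mult_iff)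
  then have hiR: "Lv L x R \<ge> c" using aR A5 by linarith
  have "Lv L x (-R) * (-R) \<ge> \<alpha> * R\<^sup>2 - c0 * R"
    using key[of "-R"] R1 c0 by (smt (verit, best) mult_le_cancel_left1 power2_minus)
  then have "R * (- Lv L x (-R) - (\<alpha> * R - c0)) \<ge> 0" by (simp add: algebra_simps power2_eq_square)
  then have "- Lv L x (-R) \<ge> \<alpha> * R - c0" using R1 by (simp add: zero_le_mult_iff)
  then have loR: "Lv L x (-R) \<le> c" using aR A5 by linarith
  have "\<exists>v. -R \<le> v \<and> v \<le> R \<and> Lv L x v = c"
    by (rule IVT'[of "Lv L x", OF loR hiR]) (use R1 in \<open>auto intro: continuous_on_subset[OF Lv_cont_v]\<close>)
  then show ?thesis by blast
qed

lemma vstar: "Lv L x (vstar L x p) = - p"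
proof -
  obtain v where v: "Lv L x v = - p" using Lv_surj by blast
  have "vstar L x p = v" unfolding vstar_def
    proof (rule the_equality)
    fix w assume "Lv L x w = - p"
    then have "Lv L x w = Lv L x v" using v by simp
    then show "w = v" by (rule Lv_inj)
  qed (rule v)
  then show ?thesis using v by simp
qed

lemma vstar_unique: "Lv L x v = - p \<Longrightarrow> v = vstar L x p"
  using vstar[of x p] Lv_inj by metis

lemma vstar_max: "- p * v - L (x, v) \<le> - p * vstar L x p - L (x, vstar L x p)"
  using tangent[of x "vstar L x p" v] vstar[of x p] by (simp add: algebra_simps)

lemma Ham_eq: "Ham L x p = - p * vstar L x p - L (x, vstar L x p)"
  unfolding Ham_def by (rule cSup_eq_maximum) (use vstar_max[of p _ x] in auto)


lemma cont_fix2: "continuous_on UNIV (\<lambda>z. Lv L (fst z) b + snd z)"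
proof -
  have "continuous_on UNIV ((\<lambda>z. Lv L (fst z) (snd z)) \<circ> (\<lambda>z::real\<times>real. (fst z, b)))"
    by (intro continuous_on_compose continuous_intros continuous_on_subset[OF Lx_Lv_cont(2)]) auto
  then show ?thesis by (intro continuous_intros) (simp add: o_def)
qed

lemma vstar_isCont: "isCont (\<lambda>z. vstar L (fst z) (snd z)) z0"
proof -
  obtain x0 p0 where z0: "z0 = (x0, p0)" by fastforce
  define v0 where "v0 = vstar L x0 p0"
  show ?thesis unfolding isCont_def z0
  proof (rule tendstoI)
    fix e :: real assume e: "e > 0"
    define a where "a = v0 - e/2"
    define b where "b = v0 + e/2"
    have "v0 < b" "a < v0" using e by (simp_all add: a_def b_def)
    then have "Lv L x0 b > Lv L x0 v0" "Lv L x0 a < Lv L x0 v0"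
      using Lv_strict_mono by blast+
    moreover have "Lv L x0 v0 = - p0" unfolding v0_def by (rule vstar)
    ultimately have gb: "Lv L x0 b + p0 > 0" and ga: "Lv L x0 a + p0 < 0"
      by linarith+
    have "isCont (\<lambda>z. Lv L (fst z) b + snd z) (x0,p0)"
      using cont_fix2[of b] continuous_on_eq_continuous_at[OF open_UNIV] by blast
    then have "((\<lambda>z. Lv L (fst z) b + snd z) \<longlongrightarrow> Lv L x0 b + p0) (at (x0, p0))"
      unfolding isCont_def by simp
    then have ev1: "\<forall>\<^sub>F z in at (x0,p0). 0 < Lv L (fst z) b + snd z"
      using gb by (rule order_tendstoD(1))
    have "isCont (\<lambda>z. Lv L (fst z) a + snd z) (x0,p0)"
      using cont_fix2[of a] continuous_on_eq_continuous_at[OF open_UNIV] by blast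
    then have "((\<lambda>z. Lv L (fst z) a + snd z) \<longlongrightarrow> Lv L x0 a + p0) (at (x0, p0))"
      unfolding isCont_def by simp
    then have ev2: "\<forall>\<^sub>F z in at (x0,p0). Lv L (fst z) a + snd z < 0"
      using ga by (rule order_tendstoD(2))
    have "\<forall>\<^sub>F z in at (x0,p0). dist (vstar L (fst z) (snd z)) v0 < e"
      using ev1 ev2
    proof eventually_elim
      case (elim z)
      define x where "x = fst z"
      define p where "p = snd z"
      have e1: "0 < Lv L x b + p" and e2: "Lv L x a + p < 0" using elim by (simp_all add: x_def p_def)
      have eq: "Lv L x (vstar L x p) = - p" by (rule vstar)
      have "vstar L x p < b"
      proof (rule ccontr)
        assume "\<not> vstar L x p < b"
        then have "Lv L x b \<le> Lv L x (vstar L x p)" by (intro Lv_mono) simp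
        then show False using e1 eq by linarith
      qed
      moreover have "vstar L x p > a"
      proof (rule ccontr)
        assume "\<not> vstar L x p > a"
        then have "Lv L x (vstar L x p) \<le> Lv L x a" by (intro Lv_mono) simp
        then show False using e2 eq by linarith
      qed
      ultimately have "\<bar>vstar L x p - v0\<bar> < e" unfolding a_def b_def using e by linarith
      then show ?case by (simp add: dist_real_def x_def p_def)
    qed
    then show "\<forall>\<^sub>F z in at (x0,p0). dist (vstar L (fst z) (snd z)) (vstar L (fst (x0,p0)) (snd (x0,p0))) < e"
      by (simp add: v0_def)
  qed
qed

lemma vstar_cont: "continuous_on UNIV (\<lambda>z. vstar L (fst z) (snd z))"
  using vstar_isCont by (simp add: continuous_on_eq_continuous_at)

lemma vstar_isCont_p: "isCont (vstar L x) p"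
proof -
  have "isCont ((\<lambda>z. vstar L (fst z) (snd z)) \<circ> (\<lambda>q. (x, q))) p"
    by (intro continuous_intros vstar_isCont)
  then show ?thesis by (simp add: o_def)
qed

lemma vstar_isCont_x: "isCont (\<lambda>y. vstar L y p) x"
proof -
  have "isCont ((\<lambda>z. vstar L (fst z) (snd z)) \<circ> (\<lambda>y. (y, p))) x"
    by (intro continuous_intros vstar_isCont)
  then show ?thesis by (simp add: o_def)
qed

lemma Hp_eq: "Hp L x p = - vstar L x p"
proof -
  have "(Ham L x has_real_derivative - vstar L x p) (at p)"
  proof (rule danskin[where g = "\<lambda>q w. - q * w - L (x, w)" and m = "vstar L x"])
    show "- q * w - L (x, w) \<le> Ham L x q" for q w using vstar_max[of q w x] Ham_eq[of x q] by simp
    show "Ham L x q = - q * vstar L x q - L (x, vstar L x q)" for q by (rule Ham_eq)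
    show "isCont (vstar L x) p" by (rule vstar_isCont_p)
    fix e :: real assume e: "e > 0"
    show "\<exists>d>0. \<forall>y w. \<bar>y - p\<bar> < d \<longrightarrow> \<bar>w - vstar L x p\<bar> < d \<longrightarrow>
        \<bar>- y * w - L (x, w) - (- p * w - L (x, w)) - - vstar L x p * (y - p)\<bar> \<le> e * \<bar>y - p\<bar>"
    proof (intro exI[of _ e] conjI allI impI)
      fix y w assume "\<bar>y - p\<bar> < e" "\<bar>w - vstar L x p\<bar> < e"
      have "- y * w - L (x, w) - (- p * w - L (x, w)) - - vstar L x p * (y - p) = - ((y - p) * (w - vstar L x p))"
        by (simp add: algebra_simps)
      also have "\<bar>\<dots>\<bar> = \<bar>y - p\<bar> * \<bar>w - vstar L x p\<bar>" by (simp add: abs_mult)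
      also have "\<dots> \<le> \<bar>y - p\<bar> * e" using \<open>\<bar>w - vstar L x p\<bar> < e\<close> by (intro mult_left_mono) auto
      finally show "\<bar>- y * w - L (x, w) - (- p * w - L (x, w)) - - vstar L x p * (y - p)\<bar> \<le> e * \<bar>y - p\<bar>"
        by (simp add: mult.commute)
    qed (use e in auto)
  qed
  then show ?thesis unfolding Hp_def by (rule DERIV_imp_deriv)
qed

lemma mvt_L: "\<exists>\<xi>. \<bar>\<xi> - x\<bar> \<le> \<bar>y - x\<bar> \<and> L (y, w) - L (x, w) = (y - x) * Lx L \<xi> w"
proof (cases y x rule: linorder_cases)
  case less
  obtain z where "y < z" "z < x" "L (x, w) - L (y, w) = (x - y) * Lx L z w"
    using MVT2[OF less, of "\<lambda>t. L (t, w)" "\<lambda>t. Lx L t w"] Lx_deriv by blast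
  then show ?thesis by (intro exI[of _ z]) (auto simp: algebra_simps)
next
  case equal then show ?thesis by auto
next
  case greater
  obtain z where "x < z" "z < y" "L (y, w) - L (x, w) = (y - x) * Lx L z w"
    using MVT2[OF greater, of "\<lambda>t. L (t, w)" "\<lambda>t. Lx L t w"] Lx_deriv by blast
  then show ?thesis by (intro exI[of _ z]) auto
qed

lemma Lx_eps:
  assumes e: "e > 0"
  shows "\<exists>d>0. \<forall>\<xi> w. \<bar>\<xi> - x\<bar> < d \<longrightarrow> \<bar>w - v\<bar> < d \<longrightarrow> \<bar>Lx L \<xi> w - Lx L x v\<bar> < e"
proof -
  have "isCont (\<lambda>z. Lx L (fst z) (snd z)) (x, v)"
    using Lx_Lv_cont(1) continuous_on_eq_continuous_at[OF open_UNIV] by blast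
  then have "\<exists>s>0. \<forall>z. z \<noteq> (x,v) \<and> norm (z - (x,v)) < s \<longrightarrow>
      norm ((\<lambda>z. Lx L (fst z) (snd z)) z - (\<lambda>z. Lx L (fst z) (snd z)) (x,v)) < e"
    using e unfolding isCont_def LIM_eq by blast
  then obtain s where s: "s > 0" and sH: "\<And>z. z \<noteq> (x,v) \<Longrightarrow> norm (z - (x,v)) < s \<Longrightarrow>
      norm ((\<lambda>z. Lx L (fst z) (snd z)) z - (\<lambda>z. Lx L (fst z) (snd z)) (x,v)) < e"
    by blast
  show ?thesis
  proof (intro exI[of _ "s/2"] conjI allI impI)
    fix \<xi> w assume a: "\<bar>\<xi> - x\<bar> < s/2" "\<bar>w - v\<bar> < s/2"
    show "\<bar>Lx L \<xi> w - Lx L x v\<bar> < e"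
    proof (cases "(\<xi>, w) = (x, v)")
      case True then show ?thesis using e by simp
    next
      case False
      have "norm ((\<xi>, w) - (x, v)) \<le> norm (\<xi> - x) + norm (w - v)"
        using norm_Pair_le[of "\<xi> - x" "w - v"] by simp
      then have "norm ((\<xi>, w) - (x, v)) < s" using a by simp
      from sH[OF False this] show ?thesis by simp
    qed
  next
    show "s / 2 > 0" using s by simp
  qed
qed

lemma Hx_eq: "Hx L x p = - Lx L x (vstar L x p)"
proof -
  define v0 where "v0 = vstar L x p"
  have "((\<lambda>y. Ham L y p) has_real_derivative - Lx L x v0) (at x)"
  proof (rule danskin[where g = "\<lambda>y w. - p * w - L (y, w)" and m = "\<lambda>y. vstar L y p"])
    show "- p * w - L (y, w) \<le> Ham L y p" for y w using vstar_max[of p w y] Ham_eq[of y p] by simp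
    show "Ham L y p = - p * vstar L y p - L (y, vstar L y p)" for y by (rule Ham_eq)
    show "isCont (\<lambda>y. vstar L y p) x" by (rule vstar_isCont_x)
    fix e :: real assume e: "e > 0"
    obtain d where d: "d > 0" "\<forall>\<xi> w. \<bar>\<xi> - x\<bar> < d \<longrightarrow> \<bar>w - v0\<bar> < d \<longrightarrow> \<bar>Lx L \<xi> w - Lx L x v0\<bar> < e"
      using Lx_eps[OF e] by blast
    show "\<exists>d>0. \<forall>y w. \<bar>y - x\<bar> < d \<longrightarrow> \<bar>w - vstar L x p\<bar> < d \<longrightarrow>
        \<bar>- p * w - L (y, w) - (- p * w - L (x, w)) - - Lx L x v0 * (y - x)\<bar> \<le> e * \<bar>y - x\<bar>"
    proof (intro exI[of _ d] conjI allI impI)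
      fix y w assume yw: "\<bar>y - x\<bar> < d" "\<bar>w - vstar L x p\<bar> < d"
      obtain \<xi> where xi: "\<bar>\<xi> - x\<bar> \<le> \<bar>y - x\<bar>" "L (y, w) - L (x, w) = (y - x) * Lx L \<xi> w"
        using mvt_L by blast
      have "- p * w - L (y, w) - (- p * w - L (x, w)) - - Lx L x v0 * (y - x)
          = - ((y - x) * (Lx L \<xi> w - Lx L x v0))"
        using xi(2) by (simp add: algebra_simps)
      also have "\<bar>\<dots>\<bar> = \<bar>y - x\<bar> * \<bar>Lx L \<xi> w - Lx L x v0\<bar>" by (simp add: abs_mult)
      also have "\<dots> \<le> \<bar>y - x\<bar> * e"
        using d(2) xi(1) yw by (intro mult_left_mono) (auto simp: v0_def intro: less_imp_le)
      finally show "\<bar>- p * w - L (y, w) - (- p * w - L (x, w)) - - Lx L x v0 * (y - x)\<bar> \<le> e * \<bar>y - x\<bar>"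
        by (simp add: mult.commute)
    qed (use d in auto)
  qed
  then show ?thesis unfolding Hx_def v0_def by (rule DERIV_imp_deriv)
qed

lemma Hx_cont: "continuous_on UNIV (\<lambda>z. Hx L (fst z) (snd z))"
proof -
  have "continuous_on UNIV ((\<lambda>z. - Lx L (fst z) (snd z)) \<circ> (\<lambda>z. (fst z, vstar L (fst z) (snd z))))"
    by (intro continuous_on_compose continuous_intros vstar_cont continuous_on_subset[OF Lx_Lv_cont(1)]) auto
  then show ?thesis by (simp add: o_def Hx_eq)
qed

lemma Hp_cont: "continuous_on UNIV (\<lambda>z. Hp L (fst z) (snd z))"
  using vstar_cont by (simp add: Hp_eq continuous_on_minus)

lemma Lv_at_vstar: "Lv L x (- Hp L x p) = - p"
  using vstar by (simp add: Hp_eq)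

lemma Lx_at_vstar: "Lx L x (- Hp L x p) = - Hx L x p"
  by (simp add: Hp_eq Hx_eq)

end


lemma L2_prod_integrable:
  fixes f g :: "'a \<Rightarrow> real"
  assumes "f \<in> borel_measurable M" "g \<in> borel_measurable M"
    "integrable M (\<lambda>x. (f x)\<^sup>2)" "integrable M (\<lambda>x. (g x)\<^sup>2)"
  shows "integrable M (\<lambda>x. f x * g x)"
proof (rule Bochner_Integration.integrable_bound[of _ "\<lambda>x. (f x)\<^sup>2 + (g x)\<^sup>2"])
  show "integrable M (\<lambda>x. (f x)\<^sup>2 + (g x)\<^sup>2)" using assms by simp
  show "(\<lambda>x. f x * g x) \<in> borel_measurable M" using assms by simp
  show "AE x in M. norm (f x * g x) \<le> norm ((f x)\<^sup>2 + (g x)\<^sup>2)"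
  proof (intro AE_I2)
    fix x
    have "2 * \<bar>f x\<bar> * \<bar>g x\<bar> \<le> (f x)\<^sup>2 + (g x)\<^sup>2"
      using sum_squares_bound[of "\<bar>f x\<bar>" "\<bar>g x\<bar>"] by (simp add: power2_eq_square)
    moreover have "0 \<le> \<bar>f x\<bar> * \<bar>g x\<bar>" by simp
    ultimately have "\<bar>f x * g x\<bar> \<le> (f x)\<^sup>2 + (g x)\<^sup>2"
      unfolding abs_mult by linarith
    then show "norm (f x * g x) \<le> norm ((f x)\<^sup>2 + (g x)\<^sup>2)" by simp
  qed
qed

lemma L2_add:
  fixes f g :: "'a \<Rightarrow> real"
  assumes "f \<in> borel_measurable M" "g \<in> borel_measurable M"
    "integrable M (\<lambda>x. (f x)\<^sup>2)" "integrable M (\<lambda>x. (g x)\<^sup>2)"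
  shows "integrable M (\<lambda>x. (f x + g x)\<^sup>2)" "integrable M (\<lambda>x. (f x - g x)\<^sup>2)"
proof -
  have i: "integrable M (\<lambda>x. f x * g x)" by (rule L2_prod_integrable[OF assms])
  have "(\<lambda>x. (f x + g x)\<^sup>2) = (\<lambda>x. (f x)\<^sup>2 + (g x)\<^sup>2 + 2 * (f x * g x))"
    by (simp add: power2_eq_square algebra_simps)
  then show "integrable M (\<lambda>x. (f x + g x)\<^sup>2)" using assms i by simp
  have "(\<lambda>x. (f x - g x)\<^sup>2) = (\<lambda>x. (f x)\<^sup>2 + (g x)\<^sup>2 - 2 * (f x * g x))"
    by (simp add: power2_eq_square algebra_simps)
  then show "integrable M (\<lambda>x. (f x - g x)\<^sup>2)" using assms i by simp
qed

lemma L2_sum: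
  fixes f :: "nat \<Rightarrow> 'a \<Rightarrow> real"
  assumes "\<And>i. i \<in> I \<Longrightarrow> f i \<in> borel_measurable M" "\<And>i. i \<in> I \<Longrightarrow> integrable M (\<lambda>x. (f i x)\<^sup>2)"
  shows "integrable M (\<lambda>x. (\<Sum>i\<in>I. f i x)\<^sup>2)"
  using assms
proof (induction I rule: infinite_finite_induct)
  case (insert i I)
  have "integrable M (\<lambda>x. (f i x + (\<Sum>i\<in>I. f i x))\<^sup>2)"
    by (rule L2_add(1)) (use insert in auto)
  then show ?case using insert by simp
qed simp_all

definition cc :: "(nat \<Rightarrow> real) \<Rightarrow> real \<Rightarrow> nat \<Rightarrow> real" where
  "cc ts s i = max (ts i) (min s (ts (Suc i)))"

definition incr :: "(real \<Rightarrow> 'a \<Rightarrow> real) \<Rightarrow> (nat \<Rightarrow> real) \<Rightarrow> (nat \<Rightarrow> 'a \<Rightarrow> real) \<Rightarrow> real \<Rightarrow> nat \<Rightarrow> 'a \<Rightarrow> real" where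
  "incr W ts xi s i \<omega> = xi i \<omega> * (W (ts (Suc i)) \<omega> - W (cc ts s i) \<omega>)"

context
  fixes M :: "'a measure" and W :: "real \<Rightarrow> 'a \<Rightarrow> real"
  assumes BM: "brownian_motion M W"
begin

lemma prob: "prob_space M" using BM unfolding brownian_motion_def by blast

lemma W_meas: "W t \<in> borel_measurable M" using BM unfolding brownian_motion_def by blast

lemma nat_gen_sub: "nat_gen M W t \<subseteq> sets M"
  unfolding nat_gen_def using W_meas by (auto intro: measurable_sets)

lemma gen_sub: "nat_gen M W t \<union> null_sets M \<subseteq> Pow (space M)"
  using nat_gen_sub sets.sets_into_space by blast

lemma space_F[simp]: "space (std_filtration M W t) = space M"
  unfolding std_filtration_def by (simp add: space_measure_of_conv)

lemma sets_F: "sets (std_filtration M W t) = sigma_sets (space M) (nat_gen M W t \<union> null_sets M)"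
  unfolding std_filtration_def using gen_sub by (simp add: sets_measure_of_conv)

lemma sets_F_sub: "sets (std_filtration M W t) \<subseteq> sets M"
  unfolding sets_F using nat_gen_sub by (intro sets.sigma_sets_subset) auto

lemma subalg_F: "subalgebra M (std_filtration M W t)"
  unfolding subalgebra_def using sets_F_sub by simp

lemma meas_F_M: "f \<in> borel_measurable (std_filtration M W t) \<Longrightarrow> f \<in> borel_measurable M"
  using subalg_F measurable_from_subalg by blast

lemma nat_gen_mono: "s \<le> t \<Longrightarrow> nat_gen M W s \<subseteq> nat_gen M W t"
  unfolding nat_gen_def by fastforce

lemma F_mono: "s \<le> t \<Longrightarrow> sets (std_filtration M W s) \<subseteq> sets (std_filtration M W t)"
  unfolding sets_F using nat_gen_mono by (intro sigma_sets_mono') blast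

lemma meas_F_mono: "s \<le> t \<Longrightarrow> f \<in> borel_measurable (std_filtration M W s) \<Longrightarrow> f \<in> borel_measurable (std_filtration M W t)"
  using F_mono[of s t] unfolding measurable_def by auto

lemma W_meas_F: "0 \<le> u \<Longrightarrow> u \<le> t \<Longrightarrow> W u \<in> borel_measurable (std_filtration M W t)"
  unfolding measurable_def sets_F
  by (auto simp: nat_gen_def intro!: sigma_sets.Basic)

definition Inc :: "real \<Rightarrow> real \<Rightarrow> 'a set set" where
  "Inc s t = sigma_sets (space M) {(\<lambda>\<omega>. W t \<omega> - W s \<omega>) -` B \<inter> space M | B. B \<in> sets borel}"

lemma indep_F:
  assumes "0 \<le> s" "s < t"
  shows "prob_space.indep_set M (sets (std_filtration M W s)) (Inc s t)"
proof -
  interpret prob_space M by (rule prob)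
  define A where "A = sigma_sets (space M) (nat_gen M W s)"
  have ind: "indep_set A (Inc s t)"
    using BM assms unfolding brownian_motion_def A_def Inc_def by blast
  have Asub: "A \<subseteq> events" using ind by (rule indep_setD_ev1)
  have Isub: "Inc s t \<subseteq> events" using ind by (rule indep_setD_ev2)
  define G where "G = A \<union> null_sets M"
  have indG: "indep_set G (Inc s t)"
  proof (rule indep_setI)
    show "G \<subseteq> events" using Asub by (auto simp: G_def)
    show "Inc s t \<subseteq> events" by (rule Isub)
    fix a b assume a: "a \<in> G" and b: "b \<in> Inc s t"
    show "prob (a \<inter> b) = prob a * prob b"
    proof (cases "a \<in> A")
      case True then show ?thesis using indep_setD[OF ind True b] by simp
    next
      case False
      then have an: "a \<in> null_sets M" using a by (auto simp: G_def)
      have "a \<inter> b \<in> null_sets M" using an b Isub by (meson Int_lower1 null_sets_subset subsetD null_setsD2 sets.Int)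
      then show ?thesis using an by (simp add: measure_eq_0_null_sets)
    qed
  qed
  have stG: "Int_stable G"
    unfolding Int_stable_def
  proof (intro ballI)
    fix a b assume a: "a \<in> G" and b: "b \<in> G"
    show "a \<inter> b \<in> G"
    proof (cases "a \<in> A \<and> b \<in> A")
      case True
      have "sigma_algebra (space M) A" unfolding A_def
        using nat_gen_sub sets.sets_into_space by (intro sigma_algebra_sigma_sets) blast
      then have "Int_stable A" using algebra.Int_stable sigma_algebra_def by blast
      then show ?thesis using True unfolding G_def Int_stable_def by blast
    next
      case False
      have ev: "a \<in> events" "b \<in> events" using a b Asub by (auto simp: G_def)
      from False have "a \<in> null_sets M \<or> b \<in> null_sets M" using a b by (auto simp: G_def)
      then have "a \<inter> b \<in> null_sets M"
        using ev by (metis Int_lower1 Int_lower2 null_sets_subset sets.Int)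
      then show ?thesis by (simp add: G_def)
    qed
  qed
  have stI: "Int_stable (Inc s t)"
  proof -
    have "sigma_algebra (space M) (Inc s t)" unfolding Inc_def
      by (intro sigma_algebra_sigma_sets) blast
    then show ?thesis using algebra.Int_stable sigma_algebra_def by blast
  qed
  have "indep_sets (\<lambda>i. sigma_sets (space M) (case_bool G (Inc s t) i)) UNIV"
    by (rule indep_sets_sigma) (use indG stG stI in \<open>auto simp: indep_set_def split: bool.split\<close>)
  then have i2: "indep_set (sigma_sets (space M) G) (sigma_sets (space M) (Inc s t))"
    unfolding indep_set_def by (rule indep_sets_mono_sets) (auto split: bool.split)
  have s1: "sets (std_filtration M W s) \<subseteq> sigma_sets (space M) G"
    unfolding sets_F G_def A_def
    by (rule sigma_sets_mono') (auto intro: sigma_sets.Basic)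
  have s2: "Inc s t \<subseteq> sigma_sets (space M) (Inc s t)" by (rule sigma_sets_superset_generator)
  show ?thesis
    using i2 unfolding indep_set_def
    by (rule indep_sets_mono_sets) (use s1 s2 in \<open>auto split: bool.split\<close>)
qed

lemma indep_var_F:
  fixes g :: "real \<Rightarrow> real"
  assumes st: "0 \<le> s" "s < t" and X: "X \<in> borel_measurable (std_filtration M W s)"
    and g: "g \<in> borel_measurable borel"
  shows "prob_space.indep_var M borel X borel (\<lambda>\<omega>. g (W t \<omega> - W s \<omega>))"
proof -
  interpret prob_space M by (rule prob)
  have XM: "X \<in> borel_measurable M" by (rule meas_F_M[OF X])
  have YM: "(\<lambda>\<omega>. g (W t \<omega> - W s \<omega>)) \<in> borel_measurable M"
    using W_meas g by measurable
  have s1: "sigma_sets (space M) {X -` A \<inter> space M | A. A \<in> sets borel} \<subseteq> sets (std_filtration M W s)"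
  proof -
    have "{X -` A \<inter> space M | A. A \<in> sets borel} \<subseteq> sets (std_filtration M W s)"
      using X unfolding measurable_def by auto
    from sets.sigma_sets_subset[OF this] show ?thesis by simp
  qed
  have s2: "sigma_sets (space M) {(\<lambda>\<omega>. g (W t \<omega> - W s \<omega>)) -` A \<inter> space M | A. A \<in> sets borel} \<subseteq> Inc s t"
    unfolding Inc_def
  proof (rule sigma_sets_subseteq, safe)
    fix A :: "real set" assume A: "A \<in> sets borel"
    have "(\<lambda>\<omega>. g (W t \<omega> - W s \<omega>)) -` A \<inter> space M = (\<lambda>\<omega>. W t \<omega> - W s \<omega>) -` (g -` A) \<inter> space M"
      by auto
    moreover have "g -` A \<in> sets borel" using g A by (metis measurable_sets space_borel vimage_Int Int_UNIV_right measurable_sets_borel)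
    ultimately show "\<exists>B. (\<lambda>\<omega>. g (W t \<omega> - W s \<omega>)) -` A \<inter> space M = (\<lambda>\<omega>. W t \<omega> - W s \<omega>) -` B \<inter> space M \<and> B \<in> sets borel"
      by blast
  qed
  show ?thesis
    unfolding indep_var_eq
  proof (intro conjI)
    show "random_variable borel X" using XM by simp
    show "random_variable borel (\<lambda>\<omega>. g (W t \<omega> - W s \<omega>))" using YM by simp
    show "indep_set (sigma_sets (space M) {X -` A \<inter> space M |A. A \<in> sets borel})
      (sigma_sets (space M) {(\<lambda>\<omega>. g (W t \<omega> - W s \<omega>)) -` A \<inter> space M |A. A \<in> sets borel})"
      using indep_F[OF st] unfolding indep_set_def
      by (rule indep_sets_mono_sets) (use s1 s2 in \<open>auto split: bool.split\<close>)
  qed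
qed


lemma incr_dist:
  assumes "0 \<le> s" "s < t"
  shows "distributed M lborel (\<lambda>\<omega>. W t \<omega> - W s \<omega>) (\<lambda>x. ennreal (normal_density 0 (sqrt (t - s)) x))"
  using BM assms unfolding brownian_motion_def by blast

lemma incr_moments:
  assumes st: "0 \<le> s" "s < t"
  shows "integrable M (\<lambda>\<omega>. W t \<omega> - W s \<omega>)" "integrable M (\<lambda>\<omega>. (W t \<omega> - W s \<omega>)\<^sup>2)"
    "(\<integral>\<omega>. W t \<omega> - W s \<omega> \<partial>M) = 0" "(\<integral>\<omega>. (W t \<omega> - W s \<omega>)\<^sup>2 \<partial>M) = t - s"
proof -
  interpret prob_space M by (rule prob)
  note D = incr_dist[OF st]
  have sig: "0 < sqrt (t - s)" using st by simp
  have "integrable lborel (\<lambda>x. normal_density 0 (sqrt (t - s)) x * x)"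
    by (intro integrable_normal_moment_nz_1 sig)
  then show i1: "integrable M (\<lambda>\<omega>. W t \<omega> - W s \<omega>)"
    using distributed_integrable[OF D, of "\<lambda>x. x"] by (simp add: normal_density_nonneg)
  have "integrable lborel (\<lambda>x. normal_density 0 (sqrt (t - s)) x * (x - 0)^2)"
    by (intro integrable_normal_moment sig)
  then show "integrable M (\<lambda>\<omega>. (W t \<omega> - W s \<omega>)\<^sup>2)"
    using distributed_integrable[OF D, of "\<lambda>x. x\<^sup>2"] by (simp add: normal_density_nonneg)
  show e: "(\<integral>\<omega>. W t \<omega> - W s \<omega> \<partial>M) = 0"
    using normal_distributed_expectation[OF sig D] by simp
  have "variance (\<lambda>\<omega>. W t \<omega> - W s \<omega>) = (sqrt (t - s))\<^sup>2"
    by (rule normal_distributed_variance[OF sig D])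
  then show "(\<integral>\<omega>. (W t \<omega> - W s \<omega>)\<^sup>2 \<partial>M) = t - s"
    using e st by simp
qed

lemma E1:
  assumes st: "0 \<le> s" "s < t" and X: "X \<in> borel_measurable (std_filtration M W s)" "integrable M X"
  shows "integrable M (\<lambda>\<omega>. X \<omega> * (W t \<omega> - W s \<omega>))" "(\<integral>\<omega>. X \<omega> * (W t \<omega> - W s \<omega>) \<partial>M) = 0"
proof -
  interpret prob_space M by (rule prob)
  have iv: "indep_var borel X borel (\<lambda>\<omega>. (\<lambda>x. x) (W t \<omega> - W s \<omega>))"
    by (rule indep_var_F[OF st X(1)]) simp
  show "integrable M (\<lambda>\<omega>. X \<omega> * (W t \<omega> - W s \<omega>))"
    using indep_var_integrable[OF iv X(2)] incr_moments[OF st] by simp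
  show "(\<integral>\<omega>. X \<omega> * (W t \<omega> - W s \<omega>) \<partial>M) = 0"
    using indep_var_lebesgue_integral[OF iv X(2)] incr_moments[OF st] by simp
qed

lemma E2:
  assumes st: "0 \<le> s" "s < t" and X: "X \<in> borel_measurable (std_filtration M W s)" "integrable M X"
  shows "integrable M (\<lambda>\<omega>. X \<omega> * (W t \<omega> - W s \<omega>)\<^sup>2)" "(\<integral>\<omega>. X \<omega> * (W t \<omega> - W s \<omega>)\<^sup>2 \<partial>M) = (\<integral>\<omega>. X \<omega> \<partial>M) * (t - s)"
proof -
  interpret prob_space M by (rule prob)
  have iv: "indep_var borel X borel (\<lambda>\<omega>. (\<lambda>x. x\<^sup>2) (W t \<omega> - W s \<omega>))"
    by (rule indep_var_F[OF st X(1)]) simp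
  show "integrable M (\<lambda>\<omega>. X \<omega> * (W t \<omega> - W s \<omega>)\<^sup>2)"
    using indep_var_integrable[OF iv X(2)] incr_moments[OF st] by simp
  show "(\<integral>\<omega>. X \<omega> * (W t \<omega> - W s \<omega>)\<^sup>2 \<partial>M) = (\<integral>\<omega>. X \<omega> \<partial>M) * (t - s)"
    using indep_var_lebesgue_integral[OF iv X(2)] incr_moments[OF st] by simp
qed


context
  fixes T :: real and n :: nat and ts :: "nat \<Rightarrow> real" and xi :: "nat \<Rightarrow> 'a \<Rightarrow> real"
  assumes SA: "simple_adapted M (std_filtration M W) T n ts xi"
begin

lemma ts0: "ts 0 = 0" and tsn: "ts n = T" and ts_lt: "i < n \<Longrightarrow> ts i < ts (Suc i)"
  and xi_F: "i < n \<Longrightarrow> xi i \<in> borel_measurable (std_filtration M W (ts i))"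
  and xi_sq: "i < n \<Longrightarrow> integrable M (\<lambda>\<omega>. (xi i \<omega>)\<^sup>2)"
  using SA unfolding simple_adapted_def by auto

lemma ts_mono: "i \<le> j \<Longrightarrow> j \<le> n \<Longrightarrow> ts i \<le> ts j"
proof (induction j)
  case 0 then show ?case by simp
next
  case (Suc j)
  show ?case
  proof (cases "i = Suc j")
    case False
    then have "i \<le> j" using Suc by simp
    then have "ts i \<le> ts j" using Suc by simp
    also have "\<dots> < ts (Suc j)" using ts_lt Suc by simp
    finally show ?thesis by simp
  qed simp
qed

lemma ts_bounds: "i \<le> n \<Longrightarrow> 0 \<le> ts i" "i \<le> n \<Longrightarrow> ts i \<le> T"
  using ts_mono[of 0 i] ts_mono[of i n] ts0 tsn by auto

lemma cc_props:
  assumes "i < n"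
  shows "ts i \<le> cc ts s i" "cc ts s i \<le> ts (Suc i)" "cc ts s i < ts (Suc i) \<Longrightarrow> s \<le> cc ts s i"
    "0 \<le> cc ts s i"
  using ts_lt[OF assms] ts_bounds[of i] assms unfolding cc_def by auto

lemma diff_eq:
  assumes "s \<le> T"
  shows "step_integral n ts xi W T \<omega> - step_integral n ts xi W s \<omega> = (\<Sum>i<n. incr W ts xi s i \<omega>)"
  unfolding step_integral_def sum_subtractf[symmetric]
proof (rule sum.cong[OF refl])
  fix i assume "i \<in> {..<n}"
  then have i: "i < n" by simp
  have b: "ts (Suc i) \<le> T" using ts_bounds[of "Suc i"] i by simp
  have a: "ts i < ts (Suc i)" using ts_lt[OF i] .
  show "xi i \<omega> * (W (min T (ts (Suc i))) \<omega> - W (min T (ts i)) \<omega>) -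
        xi i \<omega> * (W (min s (ts (Suc i))) \<omega> - W (min s (ts i)) \<omega>) = incr W ts xi s i \<omega>"
    unfolding incr_def cc_def using a b
    by (cases "s \<le> ts i"; cases "s \<le> ts (Suc i)") (auto simp: min_def max_def algebra_simps)
qed

lemma incr_F: "i < n \<Longrightarrow> incr W ts xi s i \<in> borel_measurable (std_filtration M W (ts (Suc i)))"
  unfolding incr_def
proof (intro borel_measurable_times borel_measurable_diff)
  assume i: "i < n"
  show "xi i \<in> borel_measurable (std_filtration M W (ts (Suc i)))"
    using meas_F_mono[OF _ xi_F[OF i]] ts_lt[OF i] by simp
  show "W (ts (Suc i)) \<in> borel_measurable (std_filtration M W (ts (Suc i)))"
    using ts_bounds[of "Suc i"] i by (intro W_meas_F) auto
  show "W (cc ts s i) \<in> borel_measurable (std_filtration M W (ts (Suc i)))"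
    using cc_props[OF i] by (intro W_meas_F) auto
qed

lemma incr_M: "i < n \<Longrightarrow> incr W ts xi s i \<in> borel_measurable M"
  using incr_F meas_F_M by blast

lemma xi_M: "i < n \<Longrightarrow> xi i \<in> borel_measurable M"
  using xi_F meas_F_M by blast

lemma incr_sq:
  assumes i: "i < n"
  shows "integrable M (\<lambda>\<omega>. (incr W ts xi s i \<omega>)\<^sup>2)"
    "(\<integral>\<omega>. (incr W ts xi s i \<omega>)\<^sup>2 \<partial>M) \<le> (\<integral>\<omega>. (xi i \<omega>)\<^sup>2 \<partial>M) * (ts (Suc i) - ts i)"
proof -
  interpret prob_space M by (rule prob)
  have nn: "0 \<le> (\<integral>\<omega>. (xi i \<omega>)\<^sup>2 \<partial>M)" by simp
  have "integrable M (\<lambda>\<omega>. (incr W ts xi s i \<omega>)\<^sup>2) \<and>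
    (\<integral>\<omega>. (incr W ts xi s i \<omega>)\<^sup>2 \<partial>M) \<le> (\<integral>\<omega>. (xi i \<omega>)\<^sup>2 \<partial>M) * (ts (Suc i) - ts i)"
  proof (cases "cc ts s i < ts (Suc i)")
    case True
    have X: "(\<lambda>\<omega>. (xi i \<omega>)\<^sup>2) \<in> borel_measurable (std_filtration M W (cc ts s i))"
      using meas_F_mono[OF cc_props(1)[OF i] xi_F[OF i]] by simp
    have eq: "(\<lambda>\<omega>. (incr W ts xi s i \<omega>)\<^sup>2) = (\<lambda>\<omega>. (xi i \<omega>)\<^sup>2 * (W (ts (Suc i)) \<omega> - W (cc ts s i) \<omega>)\<^sup>2)"
      by (simp add: incr_def power_mult_distrib)
    note e2 = E2[OF cc_props(4)[OF i] True X xi_sq[OF i]]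
    have "(\<integral>\<omega>. (xi i \<omega>)\<^sup>2 \<partial>M) * (ts (Suc i) - cc ts s i) \<le> (\<integral>\<omega>. (xi i \<omega>)\<^sup>2 \<partial>M) * (ts (Suc i) - ts i)"
      using cc_props(1)[OF i] nn by (intro mult_left_mono) auto
    then show ?thesis using e2 unfolding eq by simp
  next
    case False
    then have "cc ts s i = ts (Suc i)" using cc_props(2)[OF i, of s] by linarith
    then have "(\<lambda>\<omega>. (incr W ts xi s i \<omega>)\<^sup>2) = (\<lambda>\<omega>. 0)" by (simp add: incr_def)
    moreover have "0 \<le> (\<integral>\<omega>. (xi i \<omega>)\<^sup>2 \<partial>M) * (ts (Suc i) - ts i)"
      using nn ts_lt[OF i] by simp
    ultimately show ?thesis by simp
  qed
  then show "integrable M (\<lambda>\<omega>. (incr W ts xi s i \<omega>)\<^sup>2)"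
    "(\<integral>\<omega>. (incr W ts xi s i \<omega>)\<^sup>2 \<partial>M) \<le> (\<integral>\<omega>. (xi i \<omega>)\<^sup>2 \<partial>M) * (ts (Suc i) - ts i)" by auto
qed

lemma incr_orth:
  assumes ij: "i < j" "j < n"
  shows "(\<integral>\<omega>. incr W ts xi s i \<omega> * incr W ts xi s j \<omega> \<partial>M) = 0"
proof (cases "cc ts s j < ts (Suc j)")
  case True
  have i: "i < n" using ij by simp
  have "ts (Suc i) \<le> ts j" using ij by (intro ts_mono) auto
  also have "\<dots> \<le> cc ts s j" using cc_props(1)[OF ij(2)] .
  finally have le: "ts (Suc i) \<le> cc ts s j" .
  define X where "X = (\<lambda>\<omega>. incr W ts xi s i \<omega> * xi j \<omega>)"
  have XF: "X \<in> borel_measurable (std_filtration M W (cc ts s j))"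
    unfolding X_def
    using meas_F_mono[OF le incr_F[OF i]] meas_F_mono[OF cc_props(1)[OF ij(2)] xi_F[OF ij(2)]]
    by (intro borel_measurable_times)
  have Xi: "integrable M X"
    unfolding X_def by (rule L2_prod_integrable[OF incr_M[OF i] xi_M[OF ij(2)] incr_sq(1)[OF i] xi_sq[OF ij(2)]])
  have "(\<lambda>\<omega>. incr W ts xi s i \<omega> * incr W ts xi s j \<omega>) = (\<lambda>\<omega>. X \<omega> * (W (ts (Suc j)) \<omega> - W (cc ts s j) \<omega>))"
    by (simp add: X_def incr_def algebra_simps)
  then show ?thesis using E1(2)[OF cc_props(4)[OF ij(2)] True XF Xi] by simp
next
  case False
  then have "cc ts s j = ts (Suc j)" using cc_props(2)[OF ij(2), of s] by linarith
  then show ?thesis by (simp add: incr_def)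
qed

lemma incr_g:
  assumes i: "i < n" and s: "0 \<le> s" and g: "g \<in> borel_measurable (std_filtration M W s)"
    "integrable M (\<lambda>\<omega>. (g \<omega>)\<^sup>2)"
  shows "(\<integral>\<omega>. g \<omega> * incr W ts xi s i \<omega> \<partial>M) = 0"
proof (cases "cc ts s i < ts (Suc i)")
  case True
  have le: "s \<le> cc ts s i" using cc_props(3)[OF i True] .
  define X where "X = (\<lambda>\<omega>. g \<omega> * xi i \<omega>)"
  have XF: "X \<in> borel_measurable (std_filtration M W (cc ts s i))"
    unfolding X_def
    using meas_F_mono[OF le g(1)] meas_F_mono[OF cc_props(1)[OF i] xi_F[OF i]]
    by (intro borel_measurable_times)
  have Xi: "integrable M X"
    unfolding X_def by (rule L2_prod_integrable[OF meas_F_M[OF g(1)] xi_M[OF i] g(2) xi_sq[OF i]])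
  have "(\<lambda>\<omega>. g \<omega> * incr W ts xi s i \<omega>) = (\<lambda>\<omega>. X \<omega> * (W (ts (Suc i)) \<omega> - W (cc ts s i) \<omega>))"
    by (simp add: X_def incr_def algebra_simps)
  then show ?thesis using E1(2)[OF cc_props(4)[OF i] True XF Xi] by simp
next
  case False
  then have "cc ts s i = ts (Suc i)" using cc_props(2)[OF i, of s] by linarith
  then show ?thesis by (simp add: incr_def)
qed

lemma S_sq:
  shows "integrable M (\<lambda>\<omega>. (\<Sum>i<n. incr W ts xi s i \<omega>)\<^sup>2)"
    "(\<integral>\<omega>. (\<Sum>i<n. incr W ts xi s i \<omega>)\<^sup>2 \<partial>M) \<le> (\<Sum>i<n. (\<integral>\<omega>. (xi i \<omega>)\<^sup>2 \<partial>M) * (ts (Suc i) - ts i))"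
proof -
  show "integrable M (\<lambda>\<omega>. (\<Sum>i<n. incr W ts xi s i \<omega>)\<^sup>2)"
    by (rule L2_sum) (auto intro: incr_M incr_sq)
  have pi: "integrable M (\<lambda>\<omega>. incr W ts xi s i \<omega> * incr W ts xi s j \<omega>)" if "i < n" "j < n" for i j
    using that by (intro L2_prod_integrable incr_M incr_sq)
  have "(\<lambda>\<omega>. (\<Sum>i<n. incr W ts xi s i \<omega>)\<^sup>2) = (\<lambda>\<omega>. \<Sum>i<n. \<Sum>j<n. incr W ts xi s i \<omega> * incr W ts xi s j \<omega>)"
    by (simp add: power2_eq_square sum_product)
  then have "(\<integral>\<omega>. (\<Sum>i<n. incr W ts xi s i \<omega>)\<^sup>2 \<partial>M) = (\<integral>\<omega>. (\<Sum>i<n. \<Sum>j<n. incr W ts xi s i \<omega> * incr W ts xi s j \<omega>) \<partial>M)"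
    by simp
  also have "\<dots> = (\<Sum>i<n. (\<integral>\<omega>. (\<Sum>j<n. incr W ts xi s i \<omega> * incr W ts xi s j \<omega>) \<partial>M))"
    by (rule Bochner_Integration.integral_sum) (auto intro!: Bochner_Integration.integrable_sum pi)
  also have "\<dots> = (\<Sum>i<n. \<Sum>j<n. (\<integral>\<omega>. incr W ts xi s i \<omega> * incr W ts xi s j \<omega> \<partial>M))"
    by (rule sum.cong[OF refl], rule Bochner_Integration.integral_sum) (auto intro: pi)
  also have "\<dots> = (\<Sum>i<n. (\<integral>\<omega>. (incr W ts xi s i \<omega>)\<^sup>2 \<partial>M))"
  proof (rule sum.cong[OF refl])
    fix i assume "i \<in> {..<n}"
    then have i: "i < n" by simp
    have "(\<Sum>j<n. (\<integral>\<omega>. incr W ts xi s i \<omega> * incr W ts xi s j \<omega> \<partial>M)) =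
        (\<Sum>j<n. if j = i then (\<integral>\<omega>. (incr W ts xi s i \<omega>)\<^sup>2 \<partial>M) else 0)"
    proof (rule sum.cong[OF refl])
      fix j assume "j \<in> {..<n}"
      then have j: "j < n" by simp
      show "(\<integral>\<omega>. incr W ts xi s i \<omega> * incr W ts xi s j \<omega> \<partial>M) =
          (if j = i then (\<integral>\<omega>. (incr W ts xi s i \<omega>)\<^sup>2 \<partial>M) else 0)"
      proof (cases i j rule: linorder_cases)
        case less then show ?thesis using incr_orth[OF less j] by simp
      next
        case equal then show ?thesis by (simp add: power2_eq_square)
      next
        case greater then show ?thesis using incr_orth[OF greater i] by (simp add: mult.commute)
      qed
    qed
    also have "\<dots> = (\<integral>\<omega>. (incr W ts xi s i \<omega>)\<^sup>2 \<partial>M)" using i by simp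
    finally show "(\<Sum>j<n. (\<integral>\<omega>. incr W ts xi s i \<omega> * incr W ts xi s j \<omega> \<partial>M)) = (\<integral>\<omega>. (incr W ts xi s i \<omega>)\<^sup>2 \<partial>M)" .
  qed
  also have "\<dots> \<le> (\<Sum>i<n. (\<integral>\<omega>. (xi i \<omega>)\<^sup>2 \<partial>M) * (ts (Suc i) - ts i))"
    by (rule sum_mono) (auto intro: incr_sq)
  finally show "(\<integral>\<omega>. (\<Sum>i<n. incr W ts xi s i \<omega>)\<^sup>2 \<partial>M) \<le> (\<Sum>i<n. (\<integral>\<omega>. (xi i \<omega>)\<^sup>2 \<partial>M) * (ts (Suc i) - ts i))" .
qed

lemma S_g:
  assumes s: "0 \<le> s" and g: "g \<in> borel_measurable (std_filtration M W s)"
    "integrable M (\<lambda>\<omega>. (g \<omega>)\<^sup>2)"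
  shows "(\<integral>\<omega>. g \<omega> * (\<Sum>i<n. incr W ts xi s i \<omega>) \<partial>M) = 0"
proof -
  have pi: "integrable M (\<lambda>\<omega>. g \<omega> * incr W ts xi s i \<omega>)" if "i < n" for i
    using that g by (intro L2_prod_integrable incr_M incr_sq meas_F_M) auto
  have "(\<integral>\<omega>. g \<omega> * (\<Sum>i<n. incr W ts xi s i \<omega>) \<partial>M) = (\<Sum>i<n. (\<integral>\<omega>. g \<omega> * incr W ts xi s i \<omega> \<partial>M))"
    using pi by (simp add: sum_distrib_left Bochner_Integration.integral_sum)
  also have "\<dots> = 0" using incr_g[OF _ s g] by simp
  finally show ?thesis .
qed


lemma step_sq_eq:
  "(step_process n ts xi t \<omega>)\<^sup>2 = (\<Sum>i<n. indicator {ts i..<ts (Suc i)} t * (xi i \<omega>)\<^sup>2)"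
proof (cases "\<exists>k<n. ts k \<le> t \<and> t < ts (Suc k)")
  case True
  then obtain k where k: "k < n" "ts k \<le> t" "t < ts (Suc k)" by blast
  have uniq: "i = k" if "i < n" "ts i \<le> t" "t < ts (Suc i)" for i
  proof (rule ccontr)
    assume "i \<noteq> k"
    then consider "i < k" | "k < i" by linarith
    then show False
    proof cases
      case 1
      then have "ts (Suc i) \<le> ts k" using k by (intro ts_mono) auto
      then show False using that k by simp
    next
      case 2
      then have "ts (Suc k) \<le> ts i" using that by (intro ts_mono) auto
      then show False using that k by simp
    qed
  qed
  have "step_process n ts xi t \<omega> = (\<Sum>i<n. if i = k then xi k \<omega> else 0)"
    unfolding step_process_def
  proof (rule sum.cong[OF refl])
    fix i assume "i \<in> {..<n}"
    then have i: "i < n" by simp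
    show "(if ts i \<le> t \<and> t < ts (Suc i) then xi i \<omega> else 0) = (if i = k then xi k \<omega> else 0)"
    proof (cases "ts i \<le> t \<and> t < ts (Suc i)")
      case True
      then have "i = k" using uniq[OF i] by blast
      then show ?thesis using True by simp
    next
      case False
      then have "i \<noteq> k" using k by blast
      then show ?thesis using if_not_P[OF False, of "xi i \<omega>" 0] by simp
    qed
  qed
  also have "\<dots> = xi k \<omega>" using k by simp
  finally have 1: "step_process n ts xi t \<omega> = xi k \<omega>" .
  have "(\<Sum>i<n. indicator {ts i..<ts (Suc i)} t * (xi i \<omega>)\<^sup>2) = (\<Sum>i<n. if i = k then (xi k \<omega>)\<^sup>2 else 0)"
  proof (rule sum.cong[OF refl])
    fix i assume "i \<in> {..<n}"
    then have i: "i < n" by simp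
    show "indicator {ts i..<ts (Suc i)} t * (xi i \<omega>)\<^sup>2 = (if i = k then (xi k \<omega>)\<^sup>2 else 0)"
    proof (cases "ts i \<le> t \<and> t < ts (Suc i)")
      case True
      then have "i = k" using uniq[OF i] by blast
      then show ?thesis using True by (simp add: indicator_def)
    next
      case False
      then have "i \<noteq> k" using k by blast
      moreover have "indicator {ts i..<ts (Suc i)} t = (0::real)" using False by (simp add: indicator_def)
      ultimately show ?thesis by simp
    qed
  qed
  also have "\<dots> = (xi k \<omega>)\<^sup>2" using k by simp
  finally show ?thesis using 1 by simp
next
  case False
  then have "step_process n ts xi t \<omega> = 0" unfolding step_process_def by (intro sum.neutral) auto
  moreover have "(\<Sum>i<n. indicator {ts i..<ts (Suc i)} t * (xi i \<omega>)\<^sup>2) = (0::real)"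
    using False by (intro sum.neutral) (simp add: indicator_def)
  ultimately show ?thesis by simp
qed

lemma nn_step:
  "(\<integral>\<^sup>+ t\<in>{0..T}. ennreal ((step_process n ts xi t \<omega>)\<^sup>2) \<partial>lborel) =
     (\<Sum>i<n. ennreal ((xi i \<omega>)\<^sup>2 * (ts (Suc i) - ts i)))"
proof -
  have "(\<integral>\<^sup>+ t\<in>{0..T}. ennreal ((step_process n ts xi t \<omega>)\<^sup>2) \<partial>lborel) =
     (\<integral>\<^sup>+ t. (\<Sum>i<n. ennreal ((xi i \<omega>)\<^sup>2) * indicator {ts i..<ts (Suc i)} t) \<partial>lborel)"
  proof (rule nn_integral_cong)
    fix t :: real
    have sub: "{ts i..<ts (Suc i)} \<subseteq> {0..T}" if "i < n" for i
      using ts_bounds[of i] ts_bounds[of "Suc i"] that by auto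
    have "ennreal ((step_process n ts xi t \<omega>)\<^sup>2) * indicator {0..T} t =
        ennreal (\<Sum>i<n. indicator {ts i..<ts (Suc i)} t * (xi i \<omega>)\<^sup>2) * indicator {0..T} t"
      by (simp add: step_sq_eq)
    also have "\<dots> = (\<Sum>i<n. ennreal (indicator {ts i..<ts (Suc i)} t * (xi i \<omega>)\<^sup>2)) * indicator {0..T} t"
      by (subst sum_ennreal) auto
    also have "\<dots> = (\<Sum>i<n. ennreal (indicator {ts i..<ts (Suc i)} t * (xi i \<omega>)\<^sup>2) * indicator {0..T} t)"
      by (rule sum_distrib_right)
    also have "\<dots> = (\<Sum>i<n. ennreal ((xi i \<omega>)\<^sup>2) * indicator {ts i..<ts (Suc i)} t)"
    proof (rule sum.cong[OF refl])
      fix i assume "i \<in> {..<n}"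
      then show "ennreal (indicator {ts i..<ts (Suc i)} t * (xi i \<omega>)\<^sup>2) * indicator {0..T} t =
          ennreal ((xi i \<omega>)\<^sup>2) * indicator {ts i..<ts (Suc i)} t"
        using sub[of i] by (auto simp: indicator_def)
    qed
    finally show "ennreal ((step_process n ts xi t \<omega>)\<^sup>2) * indicator {0..T} t =
        (\<Sum>i<n. ennreal ((xi i \<omega>)\<^sup>2) * indicator {ts i..<ts (Suc i)} t)" .
  qed
  also have "\<dots> = (\<Sum>i<n. \<integral>\<^sup>+ t. ennreal ((xi i \<omega>)\<^sup>2) * indicator {ts i..<ts (Suc i)} t \<partial>lborel)"
    by (rule nn_integral_sum) simp
  also have "\<dots> = (\<Sum>i<n. ennreal ((xi i \<omega>)\<^sup>2 * (ts (Suc i) - ts i)))"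
  proof (rule sum.cong[OF refl])
    fix i assume "i \<in> {..<n}"
    then have i: "i < n" by simp
    have le: "ts i \<le> ts (Suc i)" using ts_lt[OF i] by simp
    show "(\<integral>\<^sup>+ t. ennreal ((xi i \<omega>)\<^sup>2) * indicator {ts i..<ts (Suc i)} t \<partial>lborel) =
        ennreal ((xi i \<omega>)\<^sup>2 * (ts (Suc i) - ts i))"
      using le by (simp add: nn_integral_cmult_indicator ennreal_mult)
  qed
  finally show ?thesis .
qed

lemma S_bound:
  assumes "s \<le> T"
  shows "(\<integral>\<^sup>+ \<omega>. ennreal ((step_integral n ts xi W T \<omega> - step_integral n ts xi W s \<omega>)\<^sup>2) \<partial>M) \<le>
    (\<integral>\<^sup>+ \<omega>. (\<integral>\<^sup>+ t\<in>{0..T}. ennreal ((step_process n ts xi t \<omega>)\<^sup>2) \<partial>lborel) \<partial>M)"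
proof -
  have "(\<integral>\<^sup>+ \<omega>. ennreal ((step_integral n ts xi W T \<omega> - step_integral n ts xi W s \<omega>)\<^sup>2) \<partial>M) =
      (\<integral>\<^sup>+ \<omega>. ennreal ((\<Sum>i<n. incr W ts xi s i \<omega>)\<^sup>2) \<partial>M)"
    using diff_eq[OF assms] by simp
  also have "\<dots> = ennreal (\<integral>\<omega>. (\<Sum>i<n. incr W ts xi s i \<omega>)\<^sup>2 \<partial>M)"
    by (rule nn_integral_eq_integral) (auto intro: S_sq)
  also have "\<dots> \<le> ennreal (\<Sum>i<n. (\<integral>\<omega>. (xi i \<omega>)\<^sup>2 \<partial>M) * (ts (Suc i) - ts i))"
    by (rule ennreal_leI) (rule S_sq)
  also have "\<dots> = (\<Sum>i<n. ennreal ((\<integral>\<omega>. (xi i \<omega>)\<^sup>2 \<partial>M) * (ts (Suc i) - ts i)))"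
  proof (rule sum_ennreal[symmetric])
    fix i assume "i \<in> {..<n}"
    then have "ts i < ts (Suc i)" using ts_lt by simp
    then show "0 \<le> (\<integral>\<omega>. (xi i \<omega>)\<^sup>2 \<partial>M) * (ts (Suc i) - ts i)"
      by (intro mult_nonneg_nonneg) auto
  qed
  also have "\<dots> = (\<Sum>i<n. \<integral>\<^sup>+ \<omega>. ennreal ((xi i \<omega>)\<^sup>2 * (ts (Suc i) - ts i)) \<partial>M)"
  proof (rule sum.cong[OF refl])
    fix i assume "i \<in> {..<n}"
    then have i: "i < n" by simp
    have "(\<integral>\<^sup>+ \<omega>. ennreal ((xi i \<omega>)\<^sup>2 * (ts (Suc i) - ts i)) \<partial>M) =
        ennreal (\<integral>\<omega>. (xi i \<omega>)\<^sup>2 * (ts (Suc i) - ts i) \<partial>M)"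
      by (rule nn_integral_eq_integral) (use xi_sq[OF i] ts_lt[OF i] in auto)
    then show "ennreal ((\<integral>\<omega>. (xi i \<omega>)\<^sup>2 \<partial>M) * (ts (Suc i) - ts i)) =
        (\<integral>\<^sup>+ \<omega>. ennreal ((xi i \<omega>)\<^sup>2 * (ts (Suc i) - ts i)) \<partial>M)" by simp
  qed
  also have "\<dots> = (\<integral>\<^sup>+ \<omega>. (\<Sum>i<n. ennreal ((xi i \<omega>)\<^sup>2 * (ts (Suc i) - ts i))) \<partial>M)"
    by (rule nn_integral_sum[symmetric]) (use xi_M in auto)
  also have "\<dots> = (\<integral>\<^sup>+ \<omega>. (\<integral>\<^sup>+ t\<in>{0..T}. ennreal ((step_process n ts xi t \<omega>)\<^sup>2) \<partial>lborel) \<partial>M)"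
    by (simp add: nn_step)
  finally show ?thesis .
qed

end

end


lemma sq3: "(p + q + r)\<^sup>2 \<le> 3 * (p\<^sup>2 + q\<^sup>2 + r\<^sup>2)" for p q r :: real
proof -
  have "0 \<le> (p - q)\<^sup>2 + (q - r)\<^sup>2 + (p - r)\<^sup>2" by simp
  then show ?thesis by (simp add: power2_eq_square algebra_simps)
qed

lemma sq2: "(p + q)\<^sup>2 \<le> 2 * (p\<^sup>2 + q\<^sup>2)" for p q :: real
proof -
  have "0 \<le> (p - q)\<^sup>2" by simp
  then show ?thesis by (simp add: power2_eq_square algebra_simps)
qed

lemma sq2m: "(p - q)\<^sup>2 \<le> 2 * p\<^sup>2 + 2 * q\<^sup>2" for p q :: real
proof -
  have "0 \<le> (p + q)\<^sup>2" by simp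
  then show ?thesis by (simp add: power2_eq_square algebra_simps)
qed

lemma enn_le2:
  fixes a b c x y :: real
  assumes "a \<le> x * b + y * c" "0 \<le> b" "0 \<le> c" "0 \<le> x" "0 \<le> y"
  shows "ennreal a \<le> ennreal x * ennreal b + ennreal y * ennreal c"
proof -
  have "ennreal a \<le> ennreal (x * b + y * c)" using assms(1) by (rule ennreal_leI)
  also have "\<dots> = ennreal x * ennreal b + ennreal y * ennreal c"
    using assms(2-) by (simp add: ennreal_plus ennreal_mult)
  finally show ?thesis .
qed

lemma enn_le3:
  fixes a b c d :: real
  assumes "a \<le> 3 * b + 3 * c + 3 * d" "0 \<le> b" "0 \<le> c" "0 \<le> d"
  shows "ennreal a \<le> 3 * ennreal b + 3 * ennreal c + 3 * ennreal d"
proof -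
  have "ennreal a \<le> ennreal (3 * b + 3 * c + 3 * d)" using assms(1) by (rule ennreal_leI)
  also have "\<dots> = ennreal 3 * ennreal b + ennreal 3 * ennreal c + ennreal 3 * ennreal d"
    using assms(2-) by (simp add: ennreal_plus ennreal_mult del: ennreal_numeral)
  finally show ?thesis by simp
qed

lemma LT_nn: "(\<integral>\<^sup>+ t\<in>{0..(T::real)}. f t \<partial>lborel) = (\<integral>\<^sup>+ t. f t \<partial>(restrict_space lborel {0..T}))"
  by (subst nn_integral_restrict_space) (auto simp: atLeastAtMost_borel)

lemma sf_LT: "sigma_finite_measure (restrict_space lborel {0..(T::real)})"
  by (rule sigma_finite_measure_restrict_space) (auto intro: lborel.sigma_finite_measure_axioms)

lemma meas_inner:
  fixes f :: "real \<times> 'a \<Rightarrow> ennreal"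
  assumes "f \<in> borel_measurable (restrict_space lborel {0..T} \<Otimes>\<^sub>M M)"
  shows "(\<lambda>\<omega>. \<integral>\<^sup>+ t. f (t, \<omega>) \<partial>(restrict_space lborel {0..T})) \<in> borel_measurable M"
proof -
  interpret LT: sigma_finite_measure "restrict_space lborel {0..T}" by (rule sf_LT)
  have "(\<lambda>(\<omega>, t). f (t, \<omega>)) \<in> borel_measurable (M \<Otimes>\<^sub>M restrict_space lborel {0..T})"
    using measurable_pair_swap[OF assms] by (simp add: split_beta')
  from LT.borel_measurable_nn_integral_fst[OF this] show ?thesis by simp
qed

lemma step_meas:
  assumes "\<And>i. i < n \<Longrightarrow> xi i \<in> borel_measurable M" and Nid: "(\<lambda>t::real. t) \<in> borel_measurable N"
  shows "(\<lambda>(t, \<omega>). step_process n ts xi t \<omega>) \<in> borel_measurable (N \<Otimes>\<^sub>M M)"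
proof -
  have "(\<lambda>(t, \<omega>). step_process n ts xi t \<omega>) = (\<lambda>z. \<Sum>i<n. (if ts i \<le> fst z \<and> fst z < ts (Suc i) then xi i (snd z) else 0))"
    by (intro ext) (simp add: step_process_def split_beta)
  also have "\<dots> \<in> borel_measurable (N \<Otimes>\<^sub>M M)"
  proof (rule borel_measurable_sum)
    fix i assume "i \<in> {..<n}"
    then have [measurable]: "xi i \<in> borel_measurable M" using assms by simp
    have [measurable]: "(\<lambda>z. fst z) \<in> borel_measurable (N \<Otimes>\<^sub>M M)"
      by (rule measurable_compose[OF measurable_fst Nid])
    show "(\<lambda>z. if ts i \<le> fst z \<and> fst z < ts (Suc i) then xi i (snd z) else 0) \<in> borel_measurable (N \<Otimes>\<^sub>M M)"
      by measurable
  qed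
  finally show ?thesis .
qed

lemma LT_id: "(\<lambda>t::real. t) \<in> borel_measurable (restrict_space lborel {0..T})"
  by (rule measurable_restrict_space1) simp


lemma section2:
  "f \<in> borel_measurable (N \<Otimes>\<^sub>M M) \<Longrightarrow> \<omega> \<in> space M \<Longrightarrow> (\<lambda>t. f (t, \<omega>)) \<in> borel_measurable N"
  by (rule measurable_compose[OF measurable_Pair2']) auto

lemma step_int_meas:
  assumes "\<And>i. i < n \<Longrightarrow> xi i \<in> borel_measurable M" "\<And>t. W t \<in> borel_measurable M"
  shows "step_integral n ts xi W t \<in> borel_measurable M"
proof -
  have "step_integral n ts xi W t = (\<lambda>\<omega>. \<Sum>i<n. xi i \<omega> * (W (min t (ts (Suc i))) \<omega> - W (min t (ts i)) \<omega>))"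
    by (intro ext) (simp add: step_integral_def)
  also have "\<dots> \<in> borel_measurable M"
    using assms by (intro borel_measurable_sum borel_measurable_times borel_measurable_diff) auto
  finally show ?thesis .
qed

context
  fixes M :: "'a measure" and W :: "real \<Rightarrow> 'a \<Rightarrow> real" and T :: real
    and Z I :: "real \<Rightarrow> 'a \<Rightarrow> real"
  assumes BM: "brownian_motion M W" and Tpos: "0 < T"
    and Zm: "(\<lambda>(t,\<omega>). Z t \<omega>) \<in> borel_measurable (restrict_space lborel {0..T} \<Otimes>\<^sub>M M)"
    and ZZ: "(\<integral>\<^sup>+\<omega>. (\<integral>\<^sup>+ t\<in>{0..T}. ennreal ((Z t \<omega>)\<^sup>2) \<partial>lborel) \<partial>M) < \<infinity>"
    and ito: "ito_integral M (std_filtration M W) W T Z I"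
begin

abbreviation "LTT \<equiv> restrict_space lborel {0..T}"
abbreviation "ZZv \<equiv> (\<integral>\<^sup>+\<omega>. (\<integral>\<^sup>+ t\<in>{0..T}. ennreal ((Z t \<omega>)\<^sup>2) \<partial>lborel) \<partial>M)"

lemma Zsq_meas: "(\<lambda>(t,\<omega>). ennreal ((Z t \<omega>)\<^sup>2)) \<in> borel_measurable (LTT \<Otimes>\<^sub>M M)"
  using Zm by measurable

lemma phi_bound:
  assumes SA: "simple_adapted M (std_filtration M W) T n ts xi"
  shows "(\<integral>\<^sup>+ \<omega>. (\<integral>\<^sup>+ t\<in>{0..T}. ennreal ((step_process n ts xi t \<omega>)\<^sup>2) \<partial>lborel) \<partial>M) \<le>
    2 * ZZv + 2 * (\<integral>\<^sup>+ \<omega>. (\<integral>\<^sup>+ t\<in>{0..T}. ennreal ((Z t \<omega> - step_process n ts xi t \<omega>)\<^sup>2) \<partial>lborel) \<partial>M)"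
proof -
  have [measurable]: "(\<lambda>(t, \<omega>). step_process n ts xi t \<omega>) \<in> borel_measurable (LTT \<Otimes>\<^sub>M M)"
    by (rule step_meas[OF xi_M[OF BM SA] LT_id])
  note Zm[measurable]
  have m1: "(\<lambda>(t,\<omega>). ennreal ((Z t \<omega>)\<^sup>2)) \<in> borel_measurable (LTT \<Otimes>\<^sub>M M)" by measurable
  have m2: "(\<lambda>(t,\<omega>). ennreal ((Z t \<omega> - step_process n ts xi t \<omega>)\<^sup>2)) \<in> borel_measurable (LTT \<Otimes>\<^sub>M M)"
    by measurable
  have "(\<integral>\<^sup>+ \<omega>. (\<integral>\<^sup>+ t. ennreal ((step_process n ts xi t \<omega>)\<^sup>2) \<partial>LTT) \<partial>M) \<le>
      (\<integral>\<^sup>+ \<omega>. (\<integral>\<^sup>+ t. 2 * ennreal ((Z t \<omega>)\<^sup>2) + 2 * ennreal ((Z t \<omega> - step_process n ts xi t \<omega>)\<^sup>2) \<partial>LTT) \<partial>M)"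
  proof (intro nn_integral_mono)
    fix \<omega> t
    have "(step_process n ts xi t \<omega>)\<^sup>2 \<le> 2 * ((Z t \<omega>)\<^sup>2 + (step_process n ts xi t \<omega> - Z t \<omega>)\<^sup>2)"
      using sq2[of "Z t \<omega>" "step_process n ts xi t \<omega> - Z t \<omega>"] by simp
    also have "\<dots> = 2 * (Z t \<omega>)\<^sup>2 + 2 * (Z t \<omega> - step_process n ts xi t \<omega>)\<^sup>2"
      by (simp add: power2_commute algebra_simps)
    finally show "ennreal ((step_process n ts xi t \<omega>)\<^sup>2) \<le>
        2 * ennreal ((Z t \<omega>)\<^sup>2) + 2 * ennreal ((Z t \<omega> - step_process n ts xi t \<omega>)\<^sup>2)"
      using enn_le2[of _ 2 _ 2] by simp
  qed
  also have "\<dots> = (\<integral>\<^sup>+ \<omega>. 2 * (\<integral>\<^sup>+ t. ennreal ((Z t \<omega>)\<^sup>2) \<partial>LTT) + 2 * (\<integral>\<^sup>+ t. ennreal ((Z t \<omega> - step_process n ts xi t \<omega>)\<^sup>2) \<partial>LTT) \<partial>M)"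
  proof (rule nn_integral_cong)
    fix \<omega> assume \<omega>: "\<omega> \<in> space M"
    have a: "(\<lambda>t. ennreal ((Z t \<omega>)\<^sup>2)) \<in> borel_measurable LTT"
      using section2[OF m1 \<omega>] by simp
    have b: "(\<lambda>t. ennreal ((Z t \<omega> - step_process n ts xi t \<omega>)\<^sup>2)) \<in> borel_measurable LTT"
      using section2[OF m2 \<omega>] by simp
    show "(\<integral>\<^sup>+ t. 2 * ennreal ((Z t \<omega>)\<^sup>2) + 2 * ennreal ((Z t \<omega> - step_process n ts xi t \<omega>)\<^sup>2) \<partial>LTT) =
        2 * (\<integral>\<^sup>+ t. ennreal ((Z t \<omega>)\<^sup>2) \<partial>LTT) + 2 * (\<integral>\<^sup>+ t. ennreal ((Z t \<omega> - step_process n ts xi t \<omega>)\<^sup>2) \<partial>LTT)"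
      using a b by (simp add: nn_integral_add nn_integral_cmult)
  qed
  also have "\<dots> = 2 * (\<integral>\<^sup>+ \<omega>. (\<integral>\<^sup>+ t. ennreal ((Z t \<omega>)\<^sup>2) \<partial>LTT) \<partial>M) + 2 * (\<integral>\<^sup>+ \<omega>. (\<integral>\<^sup>+ t. ennreal ((Z t \<omega> - step_process n ts xi t \<omega>)\<^sup>2) \<partial>LTT) \<partial>M)"
  proof -
    have a: "(\<lambda>\<omega>. \<integral>\<^sup>+ t. ennreal ((Z t \<omega>)\<^sup>2) \<partial>LTT) \<in> borel_measurable M"
      using meas_inner[OF m1] by simp
    have b: "(\<lambda>\<omega>. \<integral>\<^sup>+ t. ennreal ((Z t \<omega> - step_process n ts xi t \<omega>)\<^sup>2) \<partial>LTT) \<in> borel_measurable M"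
      using meas_inner[OF m2] by simp
    show ?thesis using a b by (simp add: nn_integral_add nn_integral_cmult)
  qed
  finally show ?thesis by (simp add: LT_nn)
qed


lemma ito_data:
  obtains n ts xi where "\<And>k. simple_adapted M (std_filtration M W) T (n k) (ts k) (xi k)"
    "(\<lambda>k. \<integral>\<^sup>+ \<omega>. (\<integral>\<^sup>+ t\<in>{0..T}.
              ennreal ((Z t \<omega> - step_process (n k) (ts k) (xi k) t \<omega>)\<^sup>2) \<partial>lborel) \<partial>M) \<longlonglongrightarrow> 0"
    "\<And>t. t \<in> {0..T} \<Longrightarrow> I t \<in> borel_measurable M"
    "\<And>t. t \<in> {0..T} \<Longrightarrow> (\<lambda>k. \<integral>\<^sup>+ \<omega>. ennreal ((I t \<omega> - step_integral (n k) (ts k) (xi k) W t \<omega>)\<^sup>2) \<partial>M) \<longlonglongrightarrow> 0"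
  using ito unfolding ito_integral_def by blast

lemma I_meas: "t \<in> {0..T} \<Longrightarrow> I t \<in> borel_measurable M"
  using ito_data by metis

lemma S_meas: "simple_adapted M (std_filtration M W) T n ts xi \<Longrightarrow> step_integral n ts xi W t \<in> borel_measurable M"
  by (rule step_int_meas) (auto intro: xi_M[OF BM] W_meas[OF BM])

lemma I_bound_k:
  assumes s: "s \<in> {0..T}" and SA: "simple_adapted M (std_filtration M W) T n ts xi"
  shows "(\<integral>\<^sup>+ \<omega>. ennreal ((I T \<omega> - I s \<omega>)\<^sup>2) \<partial>M) \<le>
    3 * (\<integral>\<^sup>+ \<omega>. ennreal ((I T \<omega> - step_integral n ts xi W T \<omega>)\<^sup>2) \<partial>M) +
    3 * (\<integral>\<^sup>+ \<omega>. ennreal ((I s \<omega> - step_integral n ts xi W s \<omega>)\<^sup>2) \<partial>M) +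
    3 * (2 * ZZv + 2 * (\<integral>\<^sup>+ \<omega>. (\<integral>\<^sup>+ t\<in>{0..T}. ennreal ((Z t \<omega> - step_process n ts xi t \<omega>)\<^sup>2) \<partial>lborel) \<partial>M))"
proof -
  have T: "T \<in> {0..T}" using Tpos by simp
  have [measurable]: "I T \<in> borel_measurable M" "I s \<in> borel_measurable M"
    "step_integral n ts xi W T \<in> borel_measurable M" "step_integral n ts xi W s \<in> borel_measurable M"
    using I_meas[OF T] I_meas[OF s] S_meas[OF SA] by auto
  define A where "A = (\<lambda>\<omega>. I T \<omega> - step_integral n ts xi W T \<omega>)"
  define B where "B = (\<lambda>\<omega>. I s \<omega> - step_integral n ts xi W s \<omega>)"
  define C where "C = (\<lambda>\<omega>. step_integral n ts xi W T \<omega> - step_integral n ts xi W s \<omega>)"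
  have [measurable]: "A \<in> borel_measurable M" "B \<in> borel_measurable M" "C \<in> borel_measurable M"
    unfolding A_def B_def C_def by measurable
  have "(\<integral>\<^sup>+ \<omega>. ennreal ((I T \<omega> - I s \<omega>)\<^sup>2) \<partial>M) \<le>
      (\<integral>\<^sup>+ \<omega>. 3 * ennreal ((A \<omega>)\<^sup>2) + 3 * ennreal ((B \<omega>)\<^sup>2) + 3 * ennreal ((C \<omega>)\<^sup>2) \<partial>M)"
  proof (rule nn_integral_mono)
    fix \<omega>
    have "I T \<omega> - I s \<omega> = A \<omega> + (- B \<omega>) + C \<omega>" by (simp add: A_def B_def C_def)
    then have "(I T \<omega> - I s \<omega>)\<^sup>2 \<le> 3 * (A \<omega>)\<^sup>2 + 3 * (B \<omega>)\<^sup>2 + 3 * (C \<omega>)\<^sup>2"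
      using sq3[of "A \<omega>" "- B \<omega>" "C \<omega>"] by simp
    then show "ennreal ((I T \<omega> - I s \<omega>)\<^sup>2) \<le> 3 * ennreal ((A \<omega>)\<^sup>2) + 3 * ennreal ((B \<omega>)\<^sup>2) + 3 * ennreal ((C \<omega>)\<^sup>2)"
      by (rule enn_le3) auto
  qed
  also have "\<dots> = 3 * (\<integral>\<^sup>+ \<omega>. ennreal ((A \<omega>)\<^sup>2) \<partial>M) + 3 * (\<integral>\<^sup>+ \<omega>. ennreal ((B \<omega>)\<^sup>2) \<partial>M) + 3 * (\<integral>\<^sup>+ \<omega>. ennreal ((C \<omega>)\<^sup>2) \<partial>M)"
    by (simp add: nn_integral_add nn_integral_cmult)
  also have "(\<integral>\<^sup>+ \<omega>. ennreal ((C \<omega>)\<^sup>2) \<partial>M) \<le> 2 * ZZv + 2 * (\<integral>\<^sup>+ \<omega>. (\<integral>\<^sup>+ t\<in>{0..T}. ennreal ((Z t \<omega> - step_process n ts xi t \<omega>)\<^sup>2) \<partial>lborel) \<partial>M)"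
    unfolding C_def using S_bound[OF BM SA, of s] phi_bound[OF SA] s by (auto intro: order.trans)
  finally show ?thesis unfolding A_def B_def by (simp add: mult_left_mono add_left_mono)
qed

lemma I_bound:
  assumes s: "s \<in> {0..T}"
  shows "(\<integral>\<^sup>+ \<omega>. ennreal ((I T \<omega> - I s \<omega>)\<^sup>2) \<partial>M) \<le> 12 + 6 * ZZv"
proof -
  have T: "T \<in> {0..T}" using Tpos by simp
  obtain n ts xi where SA: "\<And>k. simple_adapted M (std_filtration M W) T (n k) (ts k) (xi k)"
    and cZ: "(\<lambda>k. \<integral>\<^sup>+ \<omega>. (\<integral>\<^sup>+ t\<in>{0..T}.
              ennreal ((Z t \<omega> - step_process (n k) (ts k) (xi k) t \<omega>)\<^sup>2) \<partial>lborel) \<partial>M) \<longlonglongrightarrow> 0"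
    and "\<And>t. t \<in> {0..T} \<Longrightarrow> I t \<in> borel_measurable M"
    and cI: "\<And>t. t \<in> {0..T} \<Longrightarrow> (\<lambda>k. \<integral>\<^sup>+ \<omega>. ennreal ((I t \<omega> - step_integral (n k) (ts k) (xi k) W t \<omega>)\<^sup>2) \<partial>M) \<longlonglongrightarrow> 0"
    by (rule ito_data) blast
  have "\<forall>\<^sub>F k in sequentially. (\<integral>\<^sup>+ \<omega>. (\<integral>\<^sup>+ t\<in>{0..T}.
              ennreal ((Z t \<omega> - step_process (n k) (ts k) (xi k) t \<omega>)\<^sup>2) \<partial>lborel) \<partial>M) < 1"
    using cZ by (rule order_tendstoD(2)) simp
  moreover have "\<forall>\<^sub>F k in sequentially. (\<integral>\<^sup>+ \<omega>. ennreal ((I T \<omega> - step_integral (n k) (ts k) (xi k) W T \<omega>)\<^sup>2) \<partial>M) < 1"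
    using cI[OF T] by (rule order_tendstoD(2)) simp
  moreover have "\<forall>\<^sub>F k in sequentially. (\<integral>\<^sup>+ \<omega>. ennreal ((I s \<omega> - step_integral (n k) (ts k) (xi k) W s \<omega>)\<^sup>2) \<partial>M) < 1"
    using cI[OF s] by (rule order_tendstoD(2)) simp
  ultimately have "\<forall>\<^sub>F k in sequentially. (\<integral>\<^sup>+ \<omega>. (\<integral>\<^sup>+ t\<in>{0..T}.
              ennreal ((Z t \<omega> - step_process (n k) (ts k) (xi k) t \<omega>)\<^sup>2) \<partial>lborel) \<partial>M) < 1 \<and>
     (\<integral>\<^sup>+ \<omega>. ennreal ((I T \<omega> - step_integral (n k) (ts k) (xi k) W T \<omega>)\<^sup>2) \<partial>M) < 1 \<and>
     (\<integral>\<^sup>+ \<omega>. ennreal ((I s \<omega> - step_integral (n k) (ts k) (xi k) W s \<omega>)\<^sup>2) \<partial>M) < 1"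
    by eventually_elim blast
  then obtain N where N: "\<forall>k\<ge>N. (\<integral>\<^sup>+ \<omega>. (\<integral>\<^sup>+ t\<in>{0..T}.
              ennreal ((Z t \<omega> - step_process (n k) (ts k) (xi k) t \<omega>)\<^sup>2) \<partial>lborel) \<partial>M) < 1 \<and>
     (\<integral>\<^sup>+ \<omega>. ennreal ((I T \<omega> - step_integral (n k) (ts k) (xi k) W T \<omega>)\<^sup>2) \<partial>M) < 1 \<and>
     (\<integral>\<^sup>+ \<omega>. ennreal ((I s \<omega> - step_integral (n k) (ts k) (xi k) W s \<omega>)\<^sup>2) \<partial>M) < 1"
    unfolding eventually_sequentially by blast
  define k where "k = N"
  have k: "(\<integral>\<^sup>+ \<omega>. (\<integral>\<^sup>+ t\<in>{0..T}.
              ennreal ((Z t \<omega> - step_process (n k) (ts k) (xi k) t \<omega>)\<^sup>2) \<partial>lborel) \<partial>M) \<le> 1"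
     "(\<integral>\<^sup>+ \<omega>. ennreal ((I T \<omega> - step_integral (n k) (ts k) (xi k) W T \<omega>)\<^sup>2) \<partial>M) \<le> 1"
     "(\<integral>\<^sup>+ \<omega>. ennreal ((I s \<omega> - step_integral (n k) (ts k) (xi k) W s \<omega>)\<^sup>2) \<partial>M) \<le> 1"
    using N unfolding k_def by (meson order.refl less_imp_le)+
  note b = I_bound_k[OF s SA[of k]]
  have "3 * (\<integral>\<^sup>+ \<omega>. ennreal ((I T \<omega> - step_integral (n k) (ts k) (xi k) W T \<omega>)\<^sup>2) \<partial>M) +
    3 * (\<integral>\<^sup>+ \<omega>. ennreal ((I s \<omega> - step_integral (n k) (ts k) (xi k) W s \<omega>)\<^sup>2) \<partial>M) +
    3 * (2 * ZZv + 2 * (\<integral>\<^sup>+ \<omega>. (\<integral>\<^sup>+ t\<in>{0..T}. ennreal ((Z t \<omega> - step_process (n k) (ts k) (xi k) t \<omega>)\<^sup>2) \<partial>lborel) \<partial>M))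
    \<le> 3 * 1 + 3 * 1 + 3 * (2 * ZZv + 2 * 1)"
    by (intro add_mono mult_left_mono order.refl k) simp_all
  also have "\<dots> = 12 + 6 * ZZv" by (simp add: distrib_left add_ac)
  finally show ?thesis using b by (rule order.trans[rotated])
qed

lemma ZZv_fin: "12 + 6 * ZZv < \<infinity>"
  using ZZ by (simp add: ennreal_mult_less_top ennreal_add_less_top)

lemma I_L2:
  assumes s: "s \<in> {0..T}"
  shows "integrable M (\<lambda>\<omega>. (I T \<omega> - I s \<omega>)\<^sup>2)"
    "(\<integral>\<omega>. (I T \<omega> - I s \<omega>)\<^sup>2 \<partial>M) \<le> enn2real (12 + 6 * ZZv)"
proof -
  have T: "T \<in> {0..T}" using Tpos by simp
  have m: "(\<lambda>\<omega>. (I T \<omega> - I s \<omega>)\<^sup>2) \<in> borel_measurable M"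
    using I_meas[OF T] I_meas[OF s] by (intro borel_measurable_power borel_measurable_diff)
  have eq: "(\<integral>\<^sup>+ \<omega>. ennreal (norm ((I T \<omega> - I s \<omega>)\<^sup>2)) \<partial>M) = (\<integral>\<^sup>+ \<omega>. ennreal ((I T \<omega> - I s \<omega>)\<^sup>2) \<partial>M)"
    by (intro nn_integral_cong) simp
  have fin: "(\<integral>\<^sup>+ \<omega>. ennreal ((I T \<omega> - I s \<omega>)\<^sup>2) \<partial>M) < \<infinity>"
    using I_bound[OF s] ZZv_fin by (rule le_less_trans)
  show i: "integrable M (\<lambda>\<omega>. (I T \<omega> - I s \<omega>)\<^sup>2)"
    by (rule integrableI_bounded[OF m]) (simp only: eq fin)
  have "ennreal (\<integral>\<omega>. (I T \<omega> - I s \<omega>)\<^sup>2 \<partial>M) = (\<integral>\<^sup>+ \<omega>. ennreal ((I T \<omega> - I s \<omega>)\<^sup>2) \<partial>M)"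
    by (rule nn_integral_eq_integral[symmetric, OF i]) simp
  also have "\<dots> \<le> 12 + 6 * ZZv" by (rule I_bound[OF s])
  finally have le: "ennreal (\<integral>\<omega>. (I T \<omega> - I s \<omega>)\<^sup>2 \<partial>M) \<le> 12 + 6 * ZZv" .
  have nn: "0 \<le> (\<integral>\<omega>. (I T \<omega> - I s \<omega>)\<^sup>2 \<partial>M)" by (rule integral_nonneg_AE) simp
  have "enn2real (ennreal (\<integral>\<omega>. (I T \<omega> - I s \<omega>)\<^sup>2 \<partial>M)) \<le> enn2real (12 + 6 * ZZv)"
    using ZZv_fin by (intro enn2real_mono[OF le]) simp
  then show "(\<integral>\<omega>. (I T \<omega> - I s \<omega>)\<^sup>2 \<partial>M) \<le> enn2real (12 + 6 * ZZv)"
    using nn by simp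
qed


lemma I_mart:
  assumes s: "s \<in> {0..T}" and g: "g \<in> borel_measurable (std_filtration M W s)"
    "integrable M (\<lambda>\<omega>. (g \<omega>)\<^sup>2)"
  shows "integrable M (\<lambda>\<omega>. g \<omega> * (I T \<omega> - I s \<omega>))" "(\<integral>\<omega>. g \<omega> * (I T \<omega> - I s \<omega>) \<partial>M) = 0"
proof -
  have T: "T \<in> {0..T}" using Tpos by simp
  obtain n ts xi where SA: "\<And>k. simple_adapted M (std_filtration M W) T (n k) (ts k) (xi k)"
    and cZ: "(\<lambda>k. \<integral>\<^sup>+ \<omega>. (\<integral>\<^sup>+ t\<in>{0..T}.
              ennreal ((Z t \<omega> - step_process (n k) (ts k) (xi k) t \<omega>)\<^sup>2) \<partial>lborel) \<partial>M) \<longlonglongrightarrow> 0"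
    and "\<And>t. t \<in> {0..T} \<Longrightarrow> I t \<in> borel_measurable M"
    and cI: "\<And>t. t \<in> {0..T} \<Longrightarrow> (\<lambda>k. \<integral>\<^sup>+ \<omega>. ennreal ((I t \<omega> - step_integral (n k) (ts k) (xi k) W t \<omega>)\<^sup>2) \<partial>M) \<longlonglongrightarrow> 0"
    by (rule ito_data) blast
  have gM[measurable]: "g \<in> borel_measurable M" by (rule meas_F_M[OF BM g(1)])
  have IM[measurable]: "I T \<in> borel_measurable M" "I s \<in> borel_measurable M"
    using I_meas[OF T] I_meas[OF s] by auto
  have DM[measurable]: "(\<lambda>\<omega>. I T \<omega> - I s \<omega>) \<in> borel_measurable M" by measurable
  note D2 = I_L2(1)[OF s]
  show int: "integrable M (\<lambda>\<omega>. g \<omega> * (I T \<omega> - I s \<omega>))"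
    by (rule L2_prod_integrable[OF gM DM g(2) D2])
  define r where "r = (\<integral>\<omega>. g \<omega> * (I T \<omega> - I s \<omega>) \<partial>M)"
  define a where "a = (\<lambda>k. \<integral>\<^sup>+ \<omega>. ennreal ((I T \<omega> - step_integral (n k) (ts k) (xi k) W T \<omega>)\<^sup>2) \<partial>M)"
  define b where "b = (\<lambda>k. \<integral>\<^sup>+ \<omega>. ennreal ((I s \<omega> - step_integral (n k) (ts k) (xi k) W s \<omega>)\<^sup>2) \<partial>M)"
  define G where "G = (\<integral>\<^sup>+ \<omega>. ennreal ((g \<omega>)\<^sup>2) \<partial>M)"
  have G_eq: "G = ennreal (\<integral>\<omega>. (g \<omega>)\<^sup>2 \<partial>M)"
    unfolding G_def by (rule nn_integral_eq_integral[OF g(2)]) simp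
  have G_fin: "G < top" unfolding G_eq by simp
  have key: "ennreal (r\<^sup>2) \<le> G * (2 * a k + 2 * b k)" for k
  proof -
    note SAk = SA[of k]
    define Dk where "Dk = (\<lambda>\<omega>. step_integral (n k) (ts k) (xi k) W T \<omega> - step_integral (n k) (ts k) (xi k) W s \<omega>)"
    have SkM[measurable]: "step_integral (n k) (ts k) (xi k) W T \<in> borel_measurable M"
        "step_integral (n k) (ts k) (xi k) W s \<in> borel_measurable M"
      using S_meas[OF SAk] by auto
    have DkM[measurable]: "Dk \<in> borel_measurable M" unfolding Dk_def by measurable
    have Dk_eq: "Dk = (\<lambda>\<omega>. \<Sum>i<n k. incr W (ts k) (xi k) s i \<omega>)"
      unfolding Dk_def using diff_eq[OF BM SAk, of s] s by auto
    have Dk2: "integrable M (\<lambda>\<omega>. (Dk \<omega>)\<^sup>2)" unfolding Dk_eq by (rule S_sq(1)[OF BM SAk])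
    have gDk0: "(\<integral>\<omega>. g \<omega> * Dk \<omega> \<partial>M) = 0" unfolding Dk_eq
      using S_g[OF BM SAk _ g] s by auto
    have gDk: "integrable M (\<lambda>\<omega>. g \<omega> * Dk \<omega>)" by (rule L2_prod_integrable[OF gM DkM g(2) Dk2])
    define e where "e = (\<lambda>\<omega>. (I T \<omega> - I s \<omega>) - Dk \<omega>)"
    have eM[measurable]: "e \<in> borel_measurable M" unfolding e_def by measurable
    have ge_eq: "(\<lambda>\<omega>. g \<omega> * e \<omega>) = (\<lambda>\<omega>. g \<omega> * (I T \<omega> - I s \<omega>) - g \<omega> * Dk \<omega>)"
      by (simp add: e_def algebra_simps)
    have ge: "integrable M (\<lambda>\<omega>. g \<omega> * e \<omega>)" unfolding ge_eq using int gDk by simp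
    have r_eq: "r = (\<integral>\<omega>. g \<omega> * e \<omega> \<partial>M)"
      unfolding ge_eq r_def using int gDk gDk0 by simp
    have "ennreal \<bar>r\<bar> \<le> (\<integral>\<^sup>+ \<omega>. norm (g \<omega> * e \<omega>) \<partial>M)"
      unfolding r_eq using integral_norm_bound_ennreal[OF ge] by simp
    also have "\<dots> = (\<integral>\<^sup>+ \<omega>. ennreal \<bar>g \<omega>\<bar> * ennreal \<bar>e \<omega>\<bar> \<partial>M)"
      by (intro nn_integral_cong) (simp add: abs_mult ennreal_mult)
    finally have r1: "ennreal \<bar>r\<bar> \<le> (\<integral>\<^sup>+ \<omega>. ennreal \<bar>g \<omega>\<bar> * ennreal \<bar>e \<omega>\<bar> \<partial>M)" .
    have cs: "(\<integral>\<^sup>+ \<omega>. ennreal \<bar>g \<omega>\<bar> * ennreal \<bar>e \<omega>\<bar> \<partial>M)\<^sup>2 \<le>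
        (\<integral>\<^sup>+ \<omega>. ennreal \<bar>g \<omega>\<bar> ^ 2 \<partial>M) * (\<integral>\<^sup>+ \<omega>. ennreal \<bar>e \<omega>\<bar> ^ 2 \<partial>M)"
      by (rule Cauchy_Schwarz_nn_integral) measurable
    have p1: "(\<integral>\<^sup>+ \<omega>. ennreal \<bar>g \<omega>\<bar> ^ 2 \<partial>M) = G"
      unfolding G_def by (intro nn_integral_cong) (simp add: ennreal_power)
    have p2: "(\<integral>\<^sup>+ \<omega>. ennreal \<bar>e \<omega>\<bar> ^ 2 \<partial>M) = (\<integral>\<^sup>+ \<omega>. ennreal ((e \<omega>)\<^sup>2) \<partial>M)"
      by (intro nn_integral_cong) (simp add: ennreal_power)
    have "(\<integral>\<^sup>+ \<omega>. ennreal ((e \<omega>)\<^sup>2) \<partial>M) \<le>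
        (\<integral>\<^sup>+ \<omega>. 2 * ennreal ((I T \<omega> - step_integral (n k) (ts k) (xi k) W T \<omega>)\<^sup>2) +
                 2 * ennreal ((I s \<omega> - step_integral (n k) (ts k) (xi k) W s \<omega>)\<^sup>2) \<partial>M)"
    proof (rule nn_integral_mono)
      fix \<omega>
      have "e \<omega> = (I T \<omega> - step_integral (n k) (ts k) (xi k) W T \<omega>) - (I s \<omega> - step_integral (n k) (ts k) (xi k) W s \<omega>)"
        by (simp add: e_def Dk_def)
      then have "(e \<omega>)\<^sup>2 \<le> 2 * (I T \<omega> - step_integral (n k) (ts k) (xi k) W T \<omega>)\<^sup>2 + 2 * (I s \<omega> - step_integral (n k) (ts k) (xi k) W s \<omega>)\<^sup>2"
        using sq2m[of "I T \<omega> - step_integral (n k) (ts k) (xi k) W T \<omega>" "I s \<omega> - step_integral (n k) (ts k) (xi k) W s \<omega>"]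
        by simp
      then show "ennreal ((e \<omega>)\<^sup>2) \<le> 2 * ennreal ((I T \<omega> - step_integral (n k) (ts k) (xi k) W T \<omega>)\<^sup>2) +
                 2 * ennreal ((I s \<omega> - step_integral (n k) (ts k) (xi k) W s \<omega>)\<^sup>2)"
        using enn_le2[of _ 2 _ 2] by simp
    qed
    also have "\<dots> = 2 * a k + 2 * b k"
      unfolding a_def b_def by (simp add: nn_integral_add nn_integral_cmult)
    finally have e2: "(\<integral>\<^sup>+ \<omega>. ennreal ((e \<omega>)\<^sup>2) \<partial>M) \<le> 2 * a k + 2 * b k" .
    have "ennreal (r\<^sup>2) = (ennreal \<bar>r\<bar>)\<^sup>2" by (simp add: ennreal_power)
    also have "\<dots> \<le> (\<integral>\<^sup>+ \<omega>. ennreal \<bar>g \<omega>\<bar> * ennreal \<bar>e \<omega>\<bar> \<partial>M)\<^sup>2"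
      by (rule power_mono[OF r1]) simp
    also have "\<dots> \<le> G * (\<integral>\<^sup>+ \<omega>. ennreal ((e \<omega>)\<^sup>2) \<partial>M)" using cs p1 p2 by simp
    also have "\<dots> \<le> G * (2 * a k + 2 * b k)" by (rule mult_left_mono[OF e2]) simp
    finally show ?thesis .
  qed
  have la: "a \<longlonglongrightarrow> 0" unfolding a_def by (rule cI[OF T])
  have lb: "b \<longlonglongrightarrow> 0" unfolding b_def by (rule cI[OF s])
  have "(\<lambda>k. 2 * a k + 2 * b k) \<longlonglongrightarrow> 2 * 0 + 2 * 0"
    by (intro tendsto_add ennreal_tendsto_cmult la lb) simp_all
  then have "(\<lambda>k. G * (2 * a k + 2 * b k)) \<longlonglongrightarrow> G * (2 * 0 + 2 * 0)"
    by (rule ennreal_tendsto_cmult[OF G_fin])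
  then have lim: "(\<lambda>k. G * (2 * a k + 2 * b k)) \<longlonglongrightarrow> 0" by simp
  have "ennreal (r\<^sup>2) \<le> 0"
    by (rule LIMSEQ_le_const[OF lim]) (use key in blast)
  then have "r\<^sup>2 = 0" by (simp add: ennreal_le_iff2)
  then show "(\<integral>\<omega>. g \<omega> * (I T \<omega> - I s \<omega>) \<partial>M) = 0" unfolding r_def by simp
qed

end


lemma fm_LT: "finite_measure (restrict_space lborel {0..(T::real)})"
proof (rule finite_measureI)
  have "emeasure (restrict_space lborel {0..T}) (space (restrict_space lborel {0..T})) = emeasure lborel {0..T}"
    by (subst emeasure_restrict_space) auto
  then show "emeasure (restrict_space lborel {0..T}) (space (restrict_space lborel {0..T})) \<noteq> \<infinity>"
    by (cases "0 \<le> T") auto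
qed

lemma space_LT[simp]: "space (restrict_space lborel {0..(T::real)}) = {0..T}"
  by (simp add: space_restrict_space)

lemma set_int_LT:
  fixes f :: "real \<Rightarrow> real"
  assumes "0 \<le> a" "b \<le> T"
  shows "(LINT s:{a..b}|lborel. f s) = (\<integral>s. indicator {a..b} s * f s \<partial>restrict_space lborel {0..T})"
proof -
  have "(\<integral>s. indicator {a..b} s * f s \<partial>restrict_space lborel {0..T}) =
      (\<integral>s. indicator {0..T} s *\<^sub>R (indicator {a..b} s * f s) \<partial>lborel)"
    by (subst integral_restrict_space) auto
  also have "\<dots> = (LINT s:{a..b}|lborel. f s)"
    unfolding set_lebesgue_integral_def using assms
    by (intro Bochner_Integration.integral_cong) (auto simp: indicator_def)
  finally show ?thesis by simp
qed

lemma L2_L1_fin: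
  fixes u :: "real \<Rightarrow> real"
  assumes fm: "finite_measure N" and m: "u \<in> borel_measurable N" and i: "integrable N (\<lambda>t. (u t)\<^sup>2)"
  shows "integrable N u"
proof -
  interpret finite_measure N by (rule fm)
  show ?thesis
  proof (rule Bochner_Integration.integrable_bound[of _ "\<lambda>t. 1 + (u t)\<^sup>2"])
    show "integrable N (\<lambda>t. 1 + (u t)\<^sup>2)" using i by simp
    show "u \<in> borel_measurable N" by (rule m)
    show "AE x in N. norm (u x) \<le> norm (1 + (u x)\<^sup>2)"
    proof (intro AE_I2)
      fix x
      have "\<bar>u x\<bar> \<le> 1 + (u x)\<^sup>2"
      proof (cases "\<bar>u x\<bar> \<le> 1")
        case True then show ?thesis by (smt (verit) zero_le_power2)
      next
        case False
        then have "\<bar>u x\<bar> * 1 \<le> \<bar>u x\<bar> * \<bar>u x\<bar>" by (intro mult_left_mono) auto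
        then have "\<bar>u x\<bar> \<le> \<bar>u x\<bar> * \<bar>u x\<bar>" by simp
        then show ?thesis by (simp add: power2_eq_square abs_mult_self)
      qed
      then show "norm (u x) \<le> norm (1 + (u x)\<^sup>2)" by simp
    qed
  qed
qed

lemma prod_integrable:
  fixes k u :: "real \<Rightarrow> real"
  assumes "sigma_finite_measure N" "sigma_finite_measure N'"
    and k: "integrable N k" and u: "integrable N' u"
  shows "integrable (N \<Otimes>\<^sub>M N') (\<lambda>(t, s). k t * u s)"
proof -
  interpret N': sigma_finite_measure N' by fact
  have [measurable]: "k \<in> borel_measurable N" "u \<in> borel_measurable N'" using k u by auto
  show ?thesis
  proof (rule integrableI_bounded)
    show "(\<lambda>(t, s). k t * u s) \<in> borel_measurable (N \<Otimes>\<^sub>M N')" by measurable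
    have "(\<integral>\<^sup>+ z. ennreal (norm (case z of (t, s) \<Rightarrow> k t * u s)) \<partial>(N \<Otimes>\<^sub>M N')) =
        (\<integral>\<^sup>+ z. (\<lambda>(t, s). ennreal (norm (k t)) * ennreal (norm (u s))) z \<partial>(N \<Otimes>\<^sub>M N'))"
      by (intro nn_integral_cong) (auto simp: abs_mult ennreal_mult)
    also have "\<dots> = (\<integral>\<^sup>+ t. \<integral>\<^sup>+ s. ennreal (norm (k t)) * ennreal (norm (u s)) \<partial>N' \<partial>N)"
      by (subst N'.nn_integral_fst[symmetric]) auto
    also have "\<dots> = (\<integral>\<^sup>+ t. ennreal (norm (k t)) * (\<integral>\<^sup>+ s. ennreal (norm (u s)) \<partial>N') \<partial>N)"
      by (intro nn_integral_cong) (simp add: nn_integral_cmult)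
    also have "\<dots> = (\<integral>\<^sup>+ t. ennreal (norm (k t)) \<partial>N) * (\<integral>\<^sup>+ s. ennreal (norm (u s)) \<partial>N')"
      by (simp add: nn_integral_multc)
    also have "\<dots> < \<infinity>"
      using k u by (simp add: integrable_iff_bounded ennreal_mult_less_top)
    finally show "(\<integral>\<^sup>+ z. ennreal (norm (case z of (t, s) \<Rightarrow> k t * u s)) \<partial>(N \<Otimes>\<^sub>M N')) < \<infinity>" .
  qed
qed


lemma per_omega:
  fixes u p k :: "real \<Rightarrow> real" and \<psi> T :: real
  assumes T: "0 < T"
    and um: "u \<in> borel_measurable (restrict_space lborel {0..T})"
    and pm: "p \<in> borel_measurable (restrict_space lborel {0..T})"
    and ki: "integrable (restrict_space lborel {0..T}) k"
    and u2: "integrable (restrict_space lborel {0..T}) (\<lambda>t. (u t)\<^sup>2)"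
    and p2: "integrable (restrict_space lborel {0..T}) (\<lambda>t. (p t)\<^sup>2)"
  shows "(\<integral>t. (- k t * (\<integral>s. indicator {0..t} s * u s \<partial>restrict_space lborel {0..T}) - p t * u t) \<partial>restrict_space lborel {0..T})
       + \<psi> * (\<integral>s. indicator {0..T} s * u s \<partial>restrict_space lborel {0..T})
       = (\<integral>s. u s * (\<psi> - (\<integral>t. indicator {s..T} t * k t \<partial>restrict_space lborel {0..T}) - p s) \<partial>restrict_space lborel {0..T})"
proof -
  define LT where "LT = restrict_space lborel {0..T}"
  interpret finite_measure LT unfolding LT_def by (rule fm_LT)
  interpret P: pair_sigma_finite LT LT ..
  have LTid[measurable]: "(\<lambda>t::real. t) \<in> borel_measurable LT" unfolding LT_def by (rule LT_id)
  have um'[measurable]: "u \<in> borel_measurable LT" and pm'[measurable]: "p \<in> borel_measurable LT"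
    and km'[measurable]: "k \<in> borel_measurable LT"
    using um pm ki unfolding LT_def by auto
  have fstb: "(\<lambda>z. fst z) \<in> borel_measurable (LT \<Otimes>\<^sub>M LT)" and sndb: "(\<lambda>z. snd z) \<in> borel_measurable (LT \<Otimes>\<^sub>M LT)"
    by (rule measurable_compose[OF measurable_fst LTid], rule measurable_compose[OF measurable_snd LTid])
  have ui: "integrable LT u" by (rule L2_L1_fin) (use u2 um in \<open>auto simp: LT_def intro: fm_LT\<close>)
  have ki': "integrable LT k" using ki by (simp add: LT_def)
  have pu: "integrable LT (\<lambda>t. p t * u t)"
    by (rule L2_prod_integrable) (use u2 p2 um pm in \<open>auto simp: LT_def\<close>)
  define dX where "dX = (\<lambda>t. \<integral>s. indicator {0..t} s * u s \<partial>LT)"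
  define J where "J = (\<lambda>s. \<integral>t. indicator {s..T} t * k t \<partial>LT)"
  define U where "U = (\<integral>s. \<bar>u s\<bar> \<partial>LT)"
  define K where "K = (\<integral>s. \<bar>k s\<bar> \<partial>LT)"
  have ium: "(\<lambda>(t, s). indicator {0..t} s * u s) \<in> borel_measurable (LT \<Otimes>\<^sub>M LT)"
  proof -
    note fstb[measurable] sndb[measurable]
    have "(\<lambda>(t, s). indicator {0..t} s * u s) = (\<lambda>z. if 0 \<le> snd z \<and> snd z \<le> fst z then u (snd z) else 0)"
      by (auto simp: indicator_def)
    also have "\<dots> \<in> borel_measurable (LT \<Otimes>\<^sub>M LT)"
      by (intro measurable_If measurable_compose[OF measurable_snd um']) measurable
    finally show ?thesis .
  qed
  have dXm[measurable]: "dX \<in> borel_measurable LT"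
    using ium unfolding dX_def by (rule borel_measurable_lebesgue_integral)
  have Jm[measurable]: "J \<in> borel_measurable LT"
  proof -
    note fstb[measurable] sndb[measurable]
    have "(\<lambda>(s, t). indicator {s..T} t * k t) = (\<lambda>z. if fst z \<le> snd z \<and> snd z \<le> T then k (snd z) else 0)"
      by (auto simp: indicator_def)
    also have "\<dots> \<in> borel_measurable (LT \<Otimes>\<^sub>M LT)"
      by (intro measurable_If measurable_compose[OF measurable_snd km']) measurable
    finally have "(\<lambda>(s, t). indicator {s..T} t * k t) \<in> borel_measurable (LT \<Otimes>\<^sub>M LT)" .
    then show ?thesis unfolding J_def by (rule borel_measurable_lebesgue_integral)
  qed
  have ind_int: "integrable LT (\<lambda>s. \<bar>indicator {a..b} s * g s\<bar>)" if gi: "integrable LT g" for a b and g :: "real \<Rightarrow> real"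
  proof (rule Bochner_Integration.integrable_bound[of _ "\<lambda>s. \<bar>g s\<bar>"])
    have [measurable]: "g \<in> borel_measurable LT" using gi by auto
    show "integrable LT (\<lambda>s. \<bar>g s\<bar>)" using gi by simp
    have "(\<lambda>s. \<bar>indicator {a..b} s * g s\<bar>) = (\<lambda>s. if a \<le> s \<and> s \<le> b then \<bar>g s\<bar> else 0)"
      by (auto simp: indicator_def)
    also have "\<dots> \<in> borel_measurable LT" by measurable
    finally show "(\<lambda>s. \<bar>indicator {a..b} s * g s\<bar>) \<in> borel_measurable LT" .
    show "AE x in LT. norm \<bar>indicator {a..b} x * g x\<bar> \<le> norm \<bar>g x\<bar>"
      by (intro AE_I2) (auto simp: indicator_def)
  qed
  have dXb: "\<bar>dX t\<bar> \<le> U" for t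
  proof -
    have "\<bar>dX t\<bar> \<le> (\<integral>s. \<bar>indicator {0..t} s * u s\<bar> \<partial>LT)" unfolding dX_def by (rule integral_abs_bound)
    also have "\<dots> \<le> U" unfolding U_def
      using ui ind_int[OF ui] by (intro integral_mono) (auto simp: indicator_def abs_mult)
    finally show ?thesis .
  qed
  have Jb: "\<bar>J s\<bar> \<le> K" for s
  proof -
    have "\<bar>J s\<bar> \<le> (\<integral>t. \<bar>indicator {s..T} t * k t\<bar> \<partial>LT)" unfolding J_def by (rule integral_abs_bound)
    also have "\<dots> \<le> K" unfolding K_def
      using ki' ind_int[OF ki'] by (intro integral_mono) (auto simp: indicator_def abs_mult)
    finally show ?thesis .
  qed
  have kdX: "integrable LT (\<lambda>t. k t * dX t)"
  proof (rule Bochner_Integration.integrable_bound[of _ "\<lambda>t. U * \<bar>k t\<bar>"])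
    show "integrable LT (\<lambda>t. U * \<bar>k t\<bar>)" using ki' by simp
    show "(\<lambda>t. k t * dX t) \<in> borel_measurable LT" by measurable
    show "AE t in LT. norm (k t * dX t) \<le> norm (U * \<bar>k t\<bar>)"
    proof (intro AE_I2)
      fix t
      have "\<bar>k t * dX t\<bar> \<le> \<bar>k t\<bar> * U" unfolding abs_mult by (rule mult_left_mono[OF dXb]) simp
      also have "\<dots> \<le> \<bar>U * \<bar>k t\<bar>\<bar>"
        using mult_right_mono[OF abs_ge_self[of U] abs_ge_zero[of "k t"]] by (simp add: abs_mult mult.commute)
      finally show "norm (k t * dX t) \<le> norm (U * \<bar>k t\<bar>)" by simp
    qed
  qed
  have uJ: "integrable LT (\<lambda>s. u s * J s)"
  proof (rule Bochner_Integration.integrable_bound[of _ "\<lambda>s. K * \<bar>u s\<bar>"])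
    show "integrable LT (\<lambda>s. K * \<bar>u s\<bar>)" using ui by simp
    show "(\<lambda>s. u s * J s) \<in> borel_measurable LT" by measurable
    show "AE s in LT. norm (u s * J s) \<le> norm (K * \<bar>u s\<bar>)"
    proof (intro AE_I2)
      fix s
      have "\<bar>u s * J s\<bar> \<le> \<bar>u s\<bar> * K" unfolding abs_mult by (rule mult_left_mono[OF Jb]) simp
      also have "\<dots> \<le> \<bar>K * \<bar>u s\<bar>\<bar>"
        using mult_right_mono[OF abs_ge_self[of K] abs_ge_zero[of "u s"]] by (simp add: abs_mult mult.commute)
      finally show "norm (u s * J s) \<le> norm (K * \<bar>u s\<bar>)" by simp
    qed
  qed
  define f where "f = (\<lambda>t s. k t * (indicator {0..t} s * u s))"
  have fi: "integrable (LT \<Otimes>\<^sub>M LT) (case_prod f)"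
  proof (rule Bochner_Integration.integrable_bound[of _ "\<lambda>(t, s). k t * u s"])
    show "integrable (LT \<Otimes>\<^sub>M LT) (\<lambda>(t, s). k t * u s)"
      by (rule prod_integrable[OF _ _ ki' ui]) (auto intro: sigma_finite_measure_axioms)
    have "case_prod f = (\<lambda>z. k (fst z) * (\<lambda>(t, s). indicator {0..t} s * u s) z)"
      by (auto simp: f_def)
    also have "\<dots> \<in> borel_measurable (LT \<Otimes>\<^sub>M LT)"
      by (intro borel_measurable_times measurable_compose[OF measurable_fst km'] ium)
    finally show "case_prod f \<in> borel_measurable (LT \<Otimes>\<^sub>M LT)" .
    show "AE z in LT \<Otimes>\<^sub>M LT. norm (case_prod f z) \<le> norm (case z of (t, s) \<Rightarrow> k t * u s)"
      by (intro AE_I2) (auto simp: f_def indicator_def abs_mult)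
  qed
  have "(\<integral>t. k t * dX t \<partial>LT) = (\<integral>t. (\<integral>s. f t s \<partial>LT) \<partial>LT)"
    unfolding dX_def f_def by simp
  also have "\<dots> = (\<integral>s. (\<integral>t. f t s \<partial>LT) \<partial>LT)"
    by (rule P.Fubini_integral[OF fi, symmetric])
  also have "\<dots> = (\<integral>s. u s * J s \<partial>LT)"
  proof (rule Bochner_Integration.integral_cong[OF refl])
    fix s assume s: "s \<in> space LT"
    have "(\<integral>t. f t s \<partial>LT) = (\<integral>t. u s * (indicator {s..T} t * k t) \<partial>LT)"
      using s by (intro Bochner_Integration.integral_cong) (auto simp: f_def LT_def indicator_def)
    also have "\<dots> = u s * J s" unfolding J_def by simp
    finally show "(\<integral>t. f t s \<partial>LT) = u s * J s" .
  qed
  finally have F1: "(\<integral>t. k t * dX t \<partial>LT) = (\<integral>s. u s * J s \<partial>LT)" .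
  have F2: "\<psi> * (\<integral>s. indicator {0..T} s * u s \<partial>LT) = (\<integral>s. \<psi> * u s \<partial>LT)"
  proof -
    have "(\<integral>s. indicator {0..T} s * u s \<partial>LT) = (\<integral>s. u s \<partial>LT)"
      by (intro Bochner_Integration.integral_cong) (auto simp: LT_def)
    then show ?thesis by simp
  qed
  have "(\<integral>t. (- k t * dX t - p t * u t) \<partial>LT) + \<psi> * (\<integral>s. indicator {0..T} s * u s \<partial>LT)
      = - (\<integral>t. k t * dX t \<partial>LT) - (\<integral>t. p t * u t \<partial>LT) + (\<integral>s. \<psi> * u s \<partial>LT)"
    using kdX pu F2 by simp
  also have "\<dots> = - (\<integral>s. u s * J s \<partial>LT) - (\<integral>t. p t * u t \<partial>LT) + (\<integral>s. \<psi> * u s \<partial>LT)"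
    using F1 by simp
  also have "\<dots> = (\<integral>s. u s * (\<psi> - J s - p s) \<partial>LT)"
  proof -
    have "(\<lambda>s. u s * (\<psi> - J s - p s)) = (\<lambda>s. \<psi> * u s - u s * J s - p s * u s)"
      by (simp add: algebra_simps)
    then show ?thesis using uJ pu ui by simp
  qed
  finally show ?thesis unfolding LT_def dX_def J_def .
qed


lemma abs_le_sq: "\<bar>a * b\<bar> \<le> a\<^sup>2 + b\<^sup>2" for a b :: real
proof -
  have "2 * \<bar>a\<bar> * \<bar>b\<bar> \<le> a\<^sup>2 + b\<^sup>2"
    using sum_squares_bound[of "\<bar>a\<bar>" "\<bar>b\<bar>"] by (simp add: power2_eq_square)
  moreover have "0 \<le> \<bar>a\<bar> * \<bar>b\<bar>" by simp
  ultimately show ?thesis unfolding abs_mult by linarith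
qed

lemma fubini_zero:
  fixes v N :: "real \<Rightarrow> 'a \<Rightarrow> real" and K :: ennreal
  assumes sf: "sigma_finite_measure M"
    and vm: "(\<lambda>(s,\<omega>). v s \<omega>) \<in> borel_measurable (restrict_space lborel {0..T} \<Otimes>\<^sub>M M)"
    and Nm: "(\<lambda>(s,\<omega>). N s \<omega>) \<in> borel_measurable (restrict_space lborel {0..T} \<Otimes>\<^sub>M M)"
    and v2: "(\<integral>\<^sup>+ z. ennreal ((case z of (t, \<omega>) \<Rightarrow> v t \<omega>)\<^sup>2) \<partial>(restrict_space lborel {0..T} \<Otimes>\<^sub>M M)) < \<infinity>"
    and Kf: "K < \<infinity>"
    and Nb: "\<And>s. s \<in> {0..T} \<Longrightarrow> (\<integral>\<^sup>+\<omega>. ennreal ((N s \<omega>)\<^sup>2) \<partial>M) \<le> K"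
    and zero: "\<And>s. s \<in> {0..T} \<Longrightarrow> integrable M (\<lambda>\<omega>. (v s \<omega>)\<^sup>2) \<Longrightarrow> (\<integral>\<omega>. v s \<omega> * N s \<omega> \<partial>M) = 0"
  shows "(\<integral>\<omega>. (\<integral>s. v s \<omega> * N s \<omega> \<partial>restrict_space lborel {0..T}) \<partial>M) = 0"
proof -
  define LT where "LT = restrict_space lborel {0..T}"
  interpret LTf: finite_measure LT unfolding LT_def by (rule fm_LT)
  interpret Ms: sigma_finite_measure M by (rule sf)
  interpret P: pair_sigma_finite LT M ..
  have vm'[measurable]: "(\<lambda>(s,\<omega>). v s \<omega>) \<in> borel_measurable (LT \<Otimes>\<^sub>M M)" using vm by (simp add: LT_def)
  have Nm'[measurable]: "(\<lambda>(s,\<omega>). N s \<omega>) \<in> borel_measurable (LT \<Otimes>\<^sub>M M)" using Nm by (simp add: LT_def)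
  have fm[measurable]: "(\<lambda>(s,\<omega>). v s \<omega> * N s \<omega>) \<in> borel_measurable (LT \<Otimes>\<^sub>M M)" by measurable
  have v2m[measurable]: "(\<lambda>(s,\<omega>). ennreal ((v s \<omega>)\<^sup>2)) \<in> borel_measurable (LT \<Otimes>\<^sub>M M)" by measurable
  have N2m[measurable]: "(\<lambda>(s,\<omega>). ennreal ((N s \<omega>)\<^sup>2)) \<in> borel_measurable (LT \<Otimes>\<^sub>M M)" by measurable
  have fi: "integrable (LT \<Otimes>\<^sub>M M) (\<lambda>(s,\<omega>). v s \<omega> * N s \<omega>)"
  proof (rule integrableI_bounded)
    show "(\<lambda>(s,\<omega>). v s \<omega> * N s \<omega>) \<in> borel_measurable (LT \<Otimes>\<^sub>M M)" by (rule fm)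
    have "(\<integral>\<^sup>+ z. ennreal (norm (case z of (s, \<omega>) \<Rightarrow> v s \<omega> * N s \<omega>)) \<partial>(LT \<Otimes>\<^sub>M M)) \<le>
        (\<integral>\<^sup>+ z. (case z of (s,\<omega>) \<Rightarrow> ennreal ((v s \<omega>)\<^sup>2)) + (case z of (s,\<omega>) \<Rightarrow> ennreal ((N s \<omega>)\<^sup>2)) \<partial>(LT \<Otimes>\<^sub>M M))"
    proof (rule nn_integral_mono)
      fix z :: "real \<times> 'a"
      obtain s \<omega> where z: "z = (s, \<omega>)" by fastforce
      have "ennreal \<bar>v s \<omega> * N s \<omega>\<bar> \<le> ennreal ((v s \<omega>)\<^sup>2 + (N s \<omega>)\<^sup>2)"
        by (rule ennreal_leI) (rule abs_le_sq)
      then show "ennreal (norm (case z of (s, \<omega>) \<Rightarrow> v s \<omega> * N s \<omega>)) \<le>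
          (case z of (s,\<omega>) \<Rightarrow> ennreal ((v s \<omega>)\<^sup>2)) + (case z of (s,\<omega>) \<Rightarrow> ennreal ((N s \<omega>)\<^sup>2))"
        unfolding z by (simp add: ennreal_plus)
    qed
    also have "\<dots> = (\<integral>\<^sup>+ z. (case z of (s,\<omega>) \<Rightarrow> ennreal ((v s \<omega>)\<^sup>2)) \<partial>(LT \<Otimes>\<^sub>M M)) +
        (\<integral>\<^sup>+ z. (case z of (s,\<omega>) \<Rightarrow> ennreal ((N s \<omega>)\<^sup>2)) \<partial>(LT \<Otimes>\<^sub>M M))"
      by (rule nn_integral_add) (use v2m N2m in auto)
    finally have le: "(\<integral>\<^sup>+ z. ennreal (norm (case z of (s, \<omega>) \<Rightarrow> v s \<omega> * N s \<omega>)) \<partial>(LT \<Otimes>\<^sub>M M)) \<le>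
        (\<integral>\<^sup>+ z. (case z of (s,\<omega>) \<Rightarrow> ennreal ((v s \<omega>)\<^sup>2)) \<partial>(LT \<Otimes>\<^sub>M M)) +
        (\<integral>\<^sup>+ z. (case z of (s,\<omega>) \<Rightarrow> ennreal ((N s \<omega>)\<^sup>2)) \<partial>(LT \<Otimes>\<^sub>M M))" .
    have "(\<integral>\<^sup>+ z. (case z of (s,\<omega>) \<Rightarrow> ennreal ((N s \<omega>)\<^sup>2)) \<partial>(LT \<Otimes>\<^sub>M M)) =
        (\<integral>\<^sup>+ s. (\<integral>\<^sup>+ \<omega>. ennreal ((N s \<omega>)\<^sup>2) \<partial>M) \<partial>LT)"
      using Ms.nn_integral_fst[OF N2m] by simp
    also have "\<dots> \<le> (\<integral>\<^sup>+ s. K \<partial>LT)"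
      by (rule nn_integral_mono) (auto simp: LT_def intro: Nb)
    also have "\<dots> = K * emeasure LT (space LT)" by simp
    also have "\<dots> < \<infinity>"
    proof -
      have "emeasure LT (space LT) < \<infinity>" by (simp add: less_top[symmetric])
      then show ?thesis using Kf by (simp add: ennreal_mult_less_top)
    qed
    finally have Y: "(\<integral>\<^sup>+ z. (case z of (s,\<omega>) \<Rightarrow> ennreal ((N s \<omega>)\<^sup>2)) \<partial>(LT \<Otimes>\<^sub>M M)) < \<infinity>" .
    have X: "(\<integral>\<^sup>+ z. (case z of (s,\<omega>) \<Rightarrow> ennreal ((v s \<omega>)\<^sup>2)) \<partial>(LT \<Otimes>\<^sub>M M)) < \<infinity>"
      using v2 unfolding LT_def by (simp add: split_beta')
    show "(\<integral>\<^sup>+ z. ennreal (norm (case z of (s, \<omega>) \<Rightarrow> v s \<omega> * N s \<omega>)) \<partial>(LT \<Otimes>\<^sub>M M)) < \<infinity>"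
      using le_less_trans[OF le] X Y by (simp add: ennreal_add_less_top)
  qed
  have "(\<integral>\<omega>. (\<integral>s. v s \<omega> * N s \<omega> \<partial>LT) \<partial>M) = (\<integral>s. (\<integral>\<omega>. v s \<omega> * N s \<omega> \<partial>M) \<partial>LT)"
    by (rule P.Fubini_integral) (use fi in simp)
  also have "\<dots> = (\<integral>s. 0 \<partial>LT)"
  proof (rule integral_cong_AE)
    show "(\<lambda>s. \<integral>\<omega>. v s \<omega> * N s \<omega> \<partial>M) \<in> borel_measurable LT"
      by (rule Ms.borel_measurable_lebesgue_integral) (use fm in simp)
    show "(\<lambda>s. 0::real) \<in> borel_measurable LT" by simp
    have inner_m: "(\<lambda>s. \<integral>\<^sup>+ \<omega>. ennreal ((v s \<omega>)\<^sup>2) \<partial>M) \<in> borel_measurable LT"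
      using Ms.borel_measurable_nn_integral_fst[OF v2m] by simp
    have "(\<integral>\<^sup>+ s. (\<integral>\<^sup>+ \<omega>. ennreal ((v s \<omega>)\<^sup>2) \<partial>M) \<partial>LT) \<noteq> \<infinity>"
      using Ms.nn_integral_fst[OF v2m] v2 unfolding LT_def by (simp add: split_beta')
    then have ae: "AE s in LT. (\<integral>\<^sup>+ \<omega>. ennreal ((v s \<omega>)\<^sup>2) \<partial>M) \<noteq> \<infinity>"
      by (rule nn_integral_PInf_AE[OF inner_m])
    show "AE s in LT. (\<integral>\<omega>. v s \<omega> * N s \<omega> \<partial>M) = 0"
      using ae
    proof (rule AE_mp, intro AE_I2 impI)
      fix s assume s: "s \<in> space LT" and fin: "(\<integral>\<^sup>+ \<omega>. ennreal ((v s \<omega>)\<^sup>2) \<partial>M) \<noteq> \<infinity>"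
      have sT: "s \<in> {0..T}" using s by (simp add: LT_def)
      have vsm: "(\<lambda>\<omega>. (v s \<omega>)\<^sup>2) \<in> borel_measurable M"
        using measurable_compose[OF measurable_Pair1'[OF s] vm'] by simp
      have "integrable M (\<lambda>\<omega>. (v s \<omega>)\<^sup>2)"
        by (rule integrableI_bounded[OF vsm]) (use fin in \<open>simp add: top.not_eq_extremum\<close>)
      then show "(\<integral>\<omega>. v s \<omega> * N s \<omega> \<partial>M) = 0" by (rule zero[OF sT])
    qed
  qed
  also have "\<dots> = 0" by simp
  finally show ?thesis unfolding LT_def .
qed


lemma cont2_meas:
  fixes f :: "real \<Rightarrow> real \<Rightarrow> real"
  assumes c: "continuous_on UNIV (\<lambda>z. f (fst z) (snd z))"
    and a: "a \<in> borel_measurable N" and b: "b \<in> borel_measurable N"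
  shows "(\<lambda>x. f (a x) (b x)) \<in> borel_measurable N"
proof -
  have "(\<lambda>x. (a x, b x)) \<in> measurable N (borel \<Otimes>\<^sub>M borel)"
    using a b by (intro measurable_Pair)
  then have p: "(\<lambda>x. (a x, b x)) \<in> measurable N borel" by (simp add: borel_prod)
  have "(\<lambda>z. f (fst z) (snd z)) \<in> borel_measurable borel"
    by (rule borel_measurable_continuous_onI[OF c])
  from measurable_compose[OF p this] show ?thesis by simp
qed

lemma C1_deriv_cont:
  assumes "\<Psi> C1_differentiable_on UNIV"
  shows "continuous_on UNIV (deriv \<Psi>)"
proof -
  from assms obtain D where D: "\<forall>x. (\<Psi> has_vector_derivative D x) (at x)" "continuous_on UNIV D"
    unfolding C1_differentiable_on_def by blast
  have "deriv \<Psi> = D"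
  proof
    fix x
    have "(\<Psi> has_real_derivative D x) (at x)" using D(1) by (simp add: has_real_derivative_iff_has_vector_derivative)
    then show "deriv \<Psi> x = D x" by (rule DERIV_imp_deriv)
  qed
  then show ?thesis using D(2) by simp
qed

context
  fixes M :: "'a measure" and F :: "real \<Rightarrow> 'a measure" and T :: real and v :: "real \<Rightarrow> 'a \<Rightarrow> real"
  assumes HF: "H_F M F T v" and sfM: "sigma_finite_measure M"
begin

lemma HF_meas: "(\<lambda>(t,\<omega>). v t \<omega>) \<in> borel_measurable (restrict_space lborel {0..T} \<Otimes>\<^sub>M M)"
  using HF unfolding H_F_def by blast

lemma HF_adapted: "t \<in> {0..T} \<Longrightarrow> v t \<in> borel_measurable (F t)"
  using HF unfolding H_F_def by blast

lemma HF_fin: "(\<integral>\<^sup>+ z. ennreal ((case z of (t, \<omega>) \<Rightarrow> v t \<omega>)\<^sup>2) \<partial>(restrict_space lborel {0..T} \<Otimes>\<^sub>M M)) < \<infinity>"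
  using HF unfolding H_F_def by blast

lemma HF_sect: "\<omega> \<in> space M \<Longrightarrow> (\<lambda>t. v t \<omega>) \<in> borel_measurable (restrict_space lborel {0..T})"
  using section2[OF HF_meas] by simp

lemma HF_sq_meas: "(\<lambda>(t,\<omega>). ennreal ((v t \<omega>)\<^sup>2)) \<in> borel_measurable (restrict_space lborel {0..T} \<Otimes>\<^sub>M M)"
  using HF_meas by measurable

lemma HF_iter: "(\<integral>\<^sup>+\<omega>. (\<integral>\<^sup>+ t. ennreal ((v t \<omega>)\<^sup>2) \<partial>restrict_space lborel {0..T}) \<partial>M) =
   (\<integral>\<^sup>+ z. ennreal ((case z of (t, \<omega>) \<Rightarrow> v t \<omega>)\<^sup>2) \<partial>(restrict_space lborel {0..T} \<Otimes>\<^sub>M M))"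
proof -
  interpret LT: sigma_finite_measure "restrict_space lborel {0..T}" by (rule sf_LT)
  interpret Ms: sigma_finite_measure M by (rule sfM)
  interpret P: pair_sigma_finite "restrict_space lborel {0..T}" M ..
  show ?thesis using P.nn_integral_snd[OF HF_sq_meas] by (simp add: split_beta')
qed

lemma HF_fin2: "(\<integral>\<^sup>+\<omega>. (\<integral>\<^sup>+ t\<in>{0..T}. ennreal ((v t \<omega>)\<^sup>2) \<partial>lborel) \<partial>M) < \<infinity>"
  using HF_fin HF_iter by (simp add: LT_nn)

lemma HF_AE: "AE \<omega> in M. integrable (restrict_space lborel {0..T}) (\<lambda>t. (v t \<omega>)\<^sup>2)"
proof -
  have m: "(\<lambda>\<omega>. \<integral>\<^sup>+ t. ennreal ((v t \<omega>)\<^sup>2) \<partial>restrict_space lborel {0..T}) \<in> borel_measurable M"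
    using meas_inner[OF HF_sq_meas] by simp
  have "(\<integral>\<^sup>+\<omega>. (\<integral>\<^sup>+ t. ennreal ((v t \<omega>)\<^sup>2) \<partial>restrict_space lborel {0..T}) \<partial>M) \<noteq> \<infinity>"
    using HF_fin HF_iter by simp
  from nn_integral_PInf_AE[OF m this]
  show ?thesis
  proof (rule AE_mp, intro AE_I2 impI)
    fix \<omega> assume \<omega>: "\<omega> \<in> space M"
      and fin: "(\<integral>\<^sup>+ t. ennreal ((v t \<omega>)\<^sup>2) \<partial>restrict_space lborel {0..T}) \<noteq> \<infinity>"
    have sm: "(\<lambda>t. (v t \<omega>)\<^sup>2) \<in> borel_measurable (restrict_space lborel {0..T})"
      using HF_sect[OF \<omega>] by measurable
    show "integrable (restrict_space lborel {0..T}) (\<lambda>t. (v t \<omega>)\<^sup>2)"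
      by (rule integrableI_bounded[OF sm]) (use fin in \<open>simp add: top.not_eq_extremum\<close>)
  qed
qed

end


theorem proposition3p5:
  fixes M :: "'a measure" and W :: "real \<Rightarrow> 'a \<Rightarrow> real"
    and T \<alpha> \<beta> C x0 :: real
    and L :: "real \<times> real \<Rightarrow> real" and \<Psi> :: "real \<Rightarrow> real"
    and varpi X P Z :: "real \<Rightarrow> 'a \<Rightarrow> real"
  defines "F \<equiv> std_filtration M W"
  assumes T_pos: "0 < T"
    and prob: "prob_space M"
    and complete: "complete_measure M"
    and BM: "brownian_motion M W"
    and L_nonneg: "\<forall>x v. 0 \<le> L (x, v)"
    and L_C2: "C2_fun L"
    and L_strict_convex: "\<forall>x. strictly_convex (\<lambda>v. L (x, v))"
    and Psi_C1: "\<Psi> C1_differentiable_on UNIV"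
    and A5: "0 < \<alpha>" "0 \<le> \<beta>" "\<forall>x v. \<alpha> * v\<^sup>2 - \<beta> \<le> L (x, v)"
    and A7: "0 < C" "\<forall>x p. \<bar>Hp L x p\<bar> \<le> C * (1 + \<bar>p\<bar>)"
    and varpi: "H_F M F T varpi"
    and HX: "H_F M F T X" and HP: "H_F M F T P" and HZ: "H_F M F T Z"
    and fwd_int: "AE \<omega> in M. set_integrable lborel {0..T}
                     (\<lambda>s. Hp L (X s \<omega>) (P s \<omega> + varpi s \<omega>))"
    and fwd: "\<forall>t\<in>{0..T}. AE \<omega> in M.
                X t \<omega> = x0 - (LINT s:{0..t}|lborel. Hp L (X s \<omega>) (P s \<omega> + varpi s \<omega>))"
    and bwd_int: "AE \<omega> in M. set_integrable lborel {0..T}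
                     (\<lambda>s. Hx L (X s \<omega>) (P s \<omega> + varpi s \<omega>))"
    and bwd: "\<exists>I. ito_integral M F W T Z I \<and>
                (\<forall>t\<in>{0..T}. AE \<omega> in M.
                   P t \<omega> = deriv \<Psi> (X T \<omega>)
                     - (LINT s:{t..T}|lborel. Hx L (X s \<omega>) (P s \<omega> + varpi s \<omega>))
                     - (I T \<omega> - I t \<omega>))"
  shows "(\<forall>\<delta>v. H_F M F T \<delta>v \<longrightarrow>
            (let vs = (\<lambda>t \<omega>. - Hp L (X t \<omega>) (P t \<omega> + varpi t \<omega>));
                 \<delta>X = (\<lambda>t \<omega>. LINT s:{0..t}|lborel. \<delta>v s \<omega>)
             in (\<integral>\<omega>. ((LINT t:{0..T}|lborel.
                          Lx L (X t \<omega>) (vs t \<omega>) * \<delta>X t \<omega>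
                          + (Lv L (X t \<omega>) (vs t \<omega>) + varpi t \<omega>) * \<delta>v t \<omega>)
                        + deriv \<Psi> (X T \<omega>) * \<delta>X T \<omega>) \<partial>M) = 0))
       \<and> (\<forall>t\<in>{0..T}. \<forall>\<omega>\<in>space M.
            P t \<omega> = - Lv L (X t \<omega>) (- Hp L (X t \<omega>) (P t \<omega> + varpi t \<omega>)) - varpi t \<omega>)"
proof -
  interpret prob_space M by (rule prob)
  have sfM: "sigma_finite_measure M" by (rule sigma_finite_measure_axioms)
  have LvH: "\<And>x p. Lv L x (- Hp L x p) = - p"
    by (rule Lv_at_vstar[OF L_C2 L_nonneg L_strict_convex A5])
  have LxH: "\<And>x p. Lx L x (- Hp L x p) = - Hx L x p"
    by (rule Lx_at_vstar[OF L_C2 L_nonneg L_strict_convex A5])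
  have Hxc: "continuous_on UNIV (\<lambda>z. Hx L (fst z) (snd z))"
    by (rule Hx_cont[OF L_C2 L_nonneg L_strict_convex A5])
  have part2: "\<forall>t\<in>{0..T}. \<forall>\<omega>\<in>space M.
            P t \<omega> = - Lv L (X t \<omega>) (- Hp L (X t \<omega>) (P t \<omega> + varpi t \<omega>)) - varpi t \<omega>"
    using LvH by simp
  have part1: "H_F M F T \<delta>v \<Longrightarrow>
            (let vs = (\<lambda>t \<omega>. - Hp L (X t \<omega>) (P t \<omega> + varpi t \<omega>));
                 \<delta>X = (\<lambda>t \<omega>. LINT s:{0..t}|lborel. \<delta>v s \<omega>)
             in (\<integral>\<omega>. ((LINT t:{0..T}|lborel.
                          Lx L (X t \<omega>) (vs t \<omega>) * \<delta>X t \<omega>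
                          + (Lv L (X t \<omega>) (vs t \<omega>) + varpi t \<omega>) * \<delta>v t \<omega>)
                        + deriv \<Psi> (X T \<omega>) * \<delta>X T \<omega>) \<partial>M) = 0)" for \<delta>v
  proof -
    assume Hd: "H_F M F T \<delta>v"
    have Tin: "T \<in> {0..T}" using T_pos by simp
    have F_eq: "F = std_filtration M W" by (simp add: F_def)
    define LT where "LT = restrict_space lborel {0..T}"
    have LTid: "(\<lambda>t::real. t) \<in> borel_measurable LT" unfolding LT_def by (rule LT_id)
    interpret LTs: finite_measure LT unfolding LT_def by (rule fm_LT)
    have Xm: "(\<lambda>z. X (fst z) (snd z)) \<in> borel_measurable (LT \<Otimes>\<^sub>M M)"
      using HF_meas[OF HX sfM] by (simp add: split_beta' LT_def)
    have Pm: "(\<lambda>z. P (fst z) (snd z)) \<in> borel_measurable (LT \<Otimes>\<^sub>M M)"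
      using HF_meas[OF HP sfM] by (simp add: split_beta' LT_def)
    have wm: "(\<lambda>z. varpi (fst z) (snd z)) \<in> borel_measurable (LT \<Otimes>\<^sub>M M)"
      using HF_meas[OF varpi sfM] by (simp add: split_beta' LT_def)
    have dvm: "(\<lambda>z. \<delta>v (fst z) (snd z)) \<in> borel_measurable (LT \<Otimes>\<^sub>M M)"
      using HF_meas[OF Hd sfM] by (simp add: split_beta' LT_def)
    define h where "h = (\<lambda>t \<omega>. Hx L (X t \<omega>) (P t \<omega> + varpi t \<omega>))"
    have hm: "(\<lambda>z. h (fst z) (snd z)) \<in> borel_measurable (LT \<Otimes>\<^sub>M M)"
      unfolding h_def using Xm Pm wm by (intro cont2_meas[OF Hxc]) auto
    define \<psi> where "\<psi> = (\<lambda>\<omega>. deriv \<Psi> (X T \<omega>))"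
    have XTm: "X T \<in> borel_measurable M"
    proof -
      have "(\<lambda>\<omega>. (T, \<omega>)) \<in> measurable M (LT \<Otimes>\<^sub>M M)"
        using Tin by (intro measurable_Pair1') (simp add: LT_def)
      from measurable_compose[OF this Xm] show ?thesis by simp
    qed
    have psim: "\<psi> \<in> borel_measurable M"
      unfolding \<psi>_def
      using measurable_compose[OF XTm borel_measurable_continuous_onI[OF C1_deriv_cont[OF Psi_C1]]]
      by (simp add: o_def)
    define J where "J = (\<lambda>s \<omega>. LINT t:{s..T}|lborel. h t \<omega>)"
    have Jm: "(\<lambda>z. J (fst z) (snd z)) \<in> borel_measurable (LT \<Otimes>\<^sub>M M)"
    proof -
      have f1: "(\<lambda>y. fst (fst y)) \<in> borel_measurable ((LT \<Otimes>\<^sub>M M) \<Otimes>\<^sub>M LT)"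
        by (rule measurable_compose[OF measurable_compose[OF measurable_fst measurable_fst] LTid])
      have f2: "(\<lambda>y. snd y) \<in> borel_measurable ((LT \<Otimes>\<^sub>M M) \<Otimes>\<^sub>M LT)"
        by (rule measurable_compose[OF measurable_snd LTid])
      have f3: "(\<lambda>y. (snd y, snd (fst y))) \<in> measurable ((LT \<Otimes>\<^sub>M M) \<Otimes>\<^sub>M LT) (LT \<Otimes>\<^sub>M M)"
        by (intro measurable_Pair measurable_snd measurable_compose[OF measurable_fst measurable_snd])
      have hy: "(\<lambda>y. h (snd y) (snd (fst y))) \<in> borel_measurable ((LT \<Otimes>\<^sub>M M) \<Otimes>\<^sub>M LT)"
        using measurable_compose[OF f3 hm] by simp
      have "(\<lambda>y. if fst (fst y) \<le> snd y \<and> snd y \<le> T then h (snd y) (snd (fst y)) else 0)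
          \<in> borel_measurable ((LT \<Otimes>\<^sub>M M) \<Otimes>\<^sub>M LT)"
        using f1 f2 hy by measurable
      moreover have "(\<lambda>y. if fst (fst y) \<le> snd y \<and> snd y \<le> T then h (snd y) (snd (fst y)) else 0) =
          (\<lambda>(z, t). indicator {fst z..T} t * h t (snd z))"
        by (auto simp: indicator_def)
      ultimately have "(\<lambda>(z, t). indicator {fst z..T} t * h t (snd z)) \<in> borel_measurable ((LT \<Otimes>\<^sub>M M) \<Otimes>\<^sub>M LT)"
        by simp
      then have m2: "(\<lambda>z. \<integral>t. indicator {fst z..T} t * h t (snd z) \<partial>LT) \<in> borel_measurable (LT \<Otimes>\<^sub>M M)"
        by (rule LTs.borel_measurable_lebesgue_integral)
      show ?thesis
      proof (subst measurable_cong)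
        fix z assume "z \<in> space (LT \<Otimes>\<^sub>M M)"
        then have "fst z \<in> {0..T}" by (auto simp: space_pair_measure LT_def)
        then show "J (fst z) (snd z) = (\<integral>t. indicator {fst z..T} t * h t (snd z) \<partial>LT)"
          unfolding J_def LT_def by (intro set_int_LT) auto
      qed (rule m2)
    qed
    obtain I where ito: "ito_integral M F W T Z I"
      and bwdI: "\<forall>t\<in>{0..T}. AE \<omega> in M. P t \<omega> = \<psi> \<omega> - J t \<omega> - (I T \<omega> - I t \<omega>)"
      using bwd unfolding \<psi>_def J_def h_def by blast
    have ito': "ito_integral M (std_filtration M W) W T Z I" using ito F_eq by simp
    have Zm: "(\<lambda>(t,\<omega>). Z t \<omega>) \<in> borel_measurable (restrict_space lborel {0..T} \<Otimes>\<^sub>M M)"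
      by (rule HF_meas[OF HZ sfM])
    have ZZ: "(\<integral>\<^sup>+\<omega>. (\<integral>\<^sup>+ t\<in>{0..T}. ennreal ((Z t \<omega>)\<^sup>2) \<partial>lborel) \<partial>M) < \<infinity>"
      by (rule HF_fin2[OF HZ sfM])
    define Nf where "Nf = (\<lambda>s \<omega>. \<psi> \<omega> - J s \<omega> - P s \<omega>)"
    have Nfm: "(\<lambda>(s,\<omega>). Nf s \<omega>) \<in> borel_measurable (restrict_space lborel {0..T} \<Otimes>\<^sub>M M)"
    proof -
      have "(\<lambda>z. \<psi> (snd z) - J (fst z) (snd z) - P (fst z) (snd z)) \<in> borel_measurable (LT \<Otimes>\<^sub>M M)"
        using measurable_compose[OF measurable_snd psim] Jm Pm by (intro borel_measurable_diff) auto
      then show ?thesis by (simp add: Nf_def split_beta' LT_def)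
    qed
    have NfI: "AE \<omega> in M. Nf s \<omega> = I T \<omega> - I s \<omega>" if s: "s \<in> {0..T}" for s
    proof -
      have "AE \<omega> in M. P s \<omega> = \<psi> \<omega> - J s \<omega> - (I T \<omega> - I s \<omega>)" using bwdI s by blast
      then show ?thesis by (rule AE_mp) (intro AE_I2 impI, simp add: Nf_def)
    qed
    have C: "(\<integral>\<omega>. (\<integral>s. \<delta>v s \<omega> * Nf s \<omega> \<partial>LT) \<partial>M) = 0"
      unfolding LT_def
    proof (rule fubini_zero[OF sfM HF_meas[OF Hd sfM] Nfm HF_fin[OF Hd sfM] ZZv_fin[OF BM T_pos Zm ZZ ito']])
      fix s assume s: "s \<in> {0..T}"
      have "(\<integral>\<^sup>+\<omega>. ennreal ((Nf s \<omega>)\<^sup>2) \<partial>M) = (\<integral>\<^sup>+\<omega>. ennreal ((I T \<omega> - I s \<omega>)\<^sup>2) \<partial>M)"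
        by (rule nn_integral_cong_AE) (rule AE_mp[OF NfI[OF s]], intro AE_I2 impI, simp)
      also have "\<dots> \<le> 12 + 6 * (\<integral>\<^sup>+\<omega>. (\<integral>\<^sup>+ t\<in>{0..T}. ennreal ((Z t \<omega>)\<^sup>2) \<partial>lborel) \<partial>M)"
        by (rule I_bound[OF BM T_pos Zm ZZ ito' s])
      finally show "(\<integral>\<^sup>+\<omega>. ennreal ((Nf s \<omega>)\<^sup>2) \<partial>M) \<le> 12 + 6 * (\<integral>\<^sup>+\<omega>. (\<integral>\<^sup>+ t\<in>{0..T}. ennreal ((Z t \<omega>)\<^sup>2) \<partial>lborel) \<partial>M)" .
    next
      fix s assume s: "s \<in> {0..T}" and int: "integrable M (\<lambda>\<omega>. (\<delta>v s \<omega>)\<^sup>2)"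
      have gF: "\<delta>v s \<in> borel_measurable (std_filtration M W s)"
        using HF_adapted[OF Hd sfM s] F_eq by simp
      have gM: "\<delta>v s \<in> borel_measurable M" by (rule meas_F_M[OF BM gF])
      have sT: "T \<in> {0..T}" by (rule Tin)
      have IM: "I T \<in> borel_measurable M" "I s \<in> borel_measurable M"
        using I_meas[OF BM T_pos Zm ZZ ito' sT] I_meas[OF BM T_pos Zm ZZ ito' s] by auto
      have Nsm: "Nf s \<in> borel_measurable M"
      proof -
        have "(\<lambda>\<omega>. (s, \<omega>)) \<in> measurable M (restrict_space lborel {0..T} \<Otimes>\<^sub>M M)"
          using s by (intro measurable_Pair1') simp
        from measurable_compose[OF this Nfm] show ?thesis by simp
      qed
      have "(\<integral>\<omega>. \<delta>v s \<omega> * Nf s \<omega> \<partial>M) = (\<integral>\<omega>. \<delta>v s \<omega> * (I T \<omega> - I s \<omega>) \<partial>M)"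
      proof (rule integral_cong_AE)
        show "(\<lambda>\<omega>. \<delta>v s \<omega> * Nf s \<omega>) \<in> borel_measurable M" by (intro borel_measurable_times gM Nsm)
        show "(\<lambda>\<omega>. \<delta>v s \<omega> * (I T \<omega> - I s \<omega>)) \<in> borel_measurable M"
          by (intro borel_measurable_times borel_measurable_diff gM IM)
        show "AE \<omega> in M. \<delta>v s \<omega> * Nf s \<omega> = \<delta>v s \<omega> * (I T \<omega> - I s \<omega>)"
          by (rule AE_mp[OF NfI[OF s]]) (intro AE_I2 impI, simp)
      qed
      also have "\<dots> = 0" by (rule I_mart(2)[OF BM T_pos Zm ZZ ito' s gF int])
      finally show "(\<integral>\<omega>. \<delta>v s \<omega> * Nf s \<omega> \<partial>M) = 0" .
    qed
    define G where "G = (\<lambda>\<omega>. (LINT t:{0..T}|lborel.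
                          Lx L (X t \<omega>) (- Hp L (X t \<omega>) (P t \<omega> + varpi t \<omega>)) * (LINT s:{0..t}|lborel. \<delta>v s \<omega>)
                          + (Lv L (X t \<omega>) (- Hp L (X t \<omega>) (P t \<omega> + varpi t \<omega>)) + varpi t \<omega>) * \<delta>v t \<omega>)
                        + deriv \<Psi> (X T \<omega>) * (LINT s:{0..T}|lborel. \<delta>v s \<omega>))"
    have B: "AE \<omega> in M. G \<omega> = (\<integral>s. \<delta>v s \<omega> * Nf s \<omega> \<partial>LT)"
      using bwd_int HF_AE[OF Hd sfM] HF_AE[OF HP sfM] AE_space
    proof eventually_elim
      case (elim \<omega>)
      have \<omega>: "\<omega> \<in> space M" using elim by simp
      have kint: "integrable (restrict_space lborel {0..T}) (\<lambda>t. h t \<omega>)"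
        using elim(1) by (subst integrable_restrict_space) (auto simp: set_integrable_def h_def)
      note E = per_omega[OF T_pos HF_sect[OF Hd sfM \<omega>] HF_sect[OF HP sfM \<omega>] kint elim(2) elim(3), of "\<psi> \<omega>"]
      have fe: "(\<lambda>t. Lx L (X t \<omega>) (- Hp L (X t \<omega>) (P t \<omega> + varpi t \<omega>)) * (LINT s:{0..t}|lborel. \<delta>v s \<omega>)
                          + (Lv L (X t \<omega>) (- Hp L (X t \<omega>) (P t \<omega> + varpi t \<omega>)) + varpi t \<omega>) * \<delta>v t \<omega>)
              = (\<lambda>t. - h t \<omega> * (LINT s:{0..t}|lborel. \<delta>v s \<omega>) - P t \<omega> * \<delta>v t \<omega>)"
        by (intro ext) (simp only: LxH LvH h_def, simp)
      have "G \<omega> = (LINT t:{0..T}|lborel. - h t \<omega> * (LINT s:{0..t}|lborel. \<delta>v s \<omega>) - P t \<omega> * \<delta>v t \<omega>)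
                 + \<psi> \<omega> * (LINT s:{0..T}|lborel. \<delta>v s \<omega>)"
        unfolding G_def \<psi>_def fe ..
      also have "(LINT t:{0..T}|lborel. - h t \<omega> * (LINT s:{0..t}|lborel. \<delta>v s \<omega>) - P t \<omega> * \<delta>v t \<omega>)
          = (\<integral>t. (- h t \<omega> * (\<integral>s. indicator {0..t} s * \<delta>v s \<omega> \<partial>LT) - P t \<omega> * \<delta>v t \<omega>) \<partial>LT)"
      proof -
        have "(LINT t:{0..T}|lborel. - h t \<omega> * (LINT s:{0..t}|lborel. \<delta>v s \<omega>) - P t \<omega> * \<delta>v t \<omega>)
            = (\<integral>t. indicator {0..T} t * (- h t \<omega> * (LINT s:{0..t}|lborel. \<delta>v s \<omega>) - P t \<omega> * \<delta>v t \<omega>) \<partial>LT)"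
          unfolding LT_def by (rule set_int_LT) auto
        also have "\<dots> = (\<integral>t. (- h t \<omega> * (\<integral>s. indicator {0..t} s * \<delta>v s \<omega> \<partial>LT) - P t \<omega> * \<delta>v t \<omega>) \<partial>LT)"
        proof (rule Bochner_Integration.integral_cong[OF refl])
          fix t assume "t \<in> space LT"
          then have t: "t \<in> {0..T}" by (simp add: LT_def)
          have "(LINT s:{0..t}|lborel. \<delta>v s \<omega>) = (\<integral>s. indicator {0..t} s * \<delta>v s \<omega> \<partial>LT)"
            unfolding LT_def by (rule set_int_LT) (use t in auto)
          then show "indicator {0..T} t * (- h t \<omega> * (LINT s:{0..t}|lborel. \<delta>v s \<omega>) - P t \<omega> * \<delta>v t \<omega>)
              = - h t \<omega> * (\<integral>s. indicator {0..t} s * \<delta>v s \<omega> \<partial>LT) - P t \<omega> * \<delta>v t \<omega>"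
            using t by simp
        qed
        finally show ?thesis .
      qed
      also have "(LINT s:{0..T}|lborel. \<delta>v s \<omega>) = (\<integral>s. indicator {0..T} s * \<delta>v s \<omega> \<partial>LT)"
        unfolding LT_def by (rule set_int_LT) auto
      also have "(\<integral>t. (- h t \<omega> * (\<integral>s. indicator {0..t} s * \<delta>v s \<omega> \<partial>LT) - P t \<omega> * \<delta>v t \<omega>) \<partial>LT)
          + \<psi> \<omega> * (\<integral>s. indicator {0..T} s * \<delta>v s \<omega> \<partial>LT)
          = (\<integral>s. \<delta>v s \<omega> * (\<psi> \<omega> - (\<integral>t. indicator {s..T} t * h t \<omega> \<partial>LT) - P s \<omega>) \<partial>LT)"
        using E unfolding LT_def .
      also have "\<dots> = (\<integral>s. \<delta>v s \<omega> * Nf s \<omega> \<partial>LT)"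
      proof (rule Bochner_Integration.integral_cong[OF refl])
        fix s assume "s \<in> space LT"
        then have s: "s \<in> {0..T}" by (simp add: LT_def)
        have "J s \<omega> = (\<integral>t. indicator {s..T} t * h t \<omega> \<partial>LT)"
          unfolding J_def LT_def by (rule set_int_LT) (use s in auto)
        then show "\<delta>v s \<omega> * (\<psi> \<omega> - (\<integral>t. indicator {s..T} t * h t \<omega> \<partial>LT) - P s \<omega>) = \<delta>v s \<omega> * Nf s \<omega>"
          by (simp add: Nf_def)
      qed
      finally show ?case .
    qed
    have G'm: "(\<lambda>\<omega>. \<integral>s. \<delta>v s \<omega> * Nf s \<omega> \<partial>LT) \<in> borel_measurable M"
    proof -
      have "(\<lambda>(s,\<omega>). \<delta>v s \<omega> * Nf s \<omega>) \<in> borel_measurable (LT \<Otimes>\<^sub>M M)"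
        using dvm Nfm by (simp add: split_beta' LT_def)
      from measurable_pair_swap[OF this] have "(\<lambda>(\<omega>, s). \<delta>v s \<omega> * Nf s \<omega>) \<in> borel_measurable (M \<Otimes>\<^sub>M LT)"
        by simp
      then show ?thesis by (rule LTs.borel_measurable_lebesgue_integral)
    qed
    have "(\<integral>\<omega>. G \<omega> \<partial>M) = 0"
    proof (cases "G \<in> borel_measurable M")
      case True
      have "(\<integral>\<omega>. G \<omega> \<partial>M) = (\<integral>\<omega>. (\<integral>s. \<delta>v s \<omega> * Nf s \<omega> \<partial>LT) \<partial>M)"
        by (rule integral_cong_AE[OF True G'm B])
      then show ?thesis using C by simp
    next
      case False
      then have "\<not> integrable M G" by auto
      then show ?thesis by (rule not_integrable_integral_eq)
    qed
    then show ?thesis unfolding Let_def G_def .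

  qed
  show ?thesis using part1 part2 by blast
qed


end
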